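(* Let $A$ be a bounded linear operator on a complex Hilbert space $\mathcal{H}$ which is irreducible, i.e. the only orthogonal projections commuting with $A$ are $0$ and $I$. Let $N(A)$ denote the set of all bounded normal operators $M$ on $\mathcal{H}$ with $AM = MA$. Then \[ \inf_{M \in N(A)} \|A + M\| = \inf_{\lambda \in \mathbb{C}} \|A - \lambda I\| . \] *)

theory Defs
  imports "HOL-Analysis.Analysis"
begin

class scaleC = scaleR +
  fixes scaleC :: "complex \<Rightarrow> 'a \<Rightarrow> 'a" (infixr "*\<^sub>C" 75)
  assumes scaleR_scaleC: "scaleR r = scaleC (complex_of_real r)"

class complex_vector = scaleC + real_vector +
  assumes scaleC_add_right: "a *\<^sub>C (x + y) = a *\<^sub>C x + a *\<^sub>C y"
    and scaleC_add_left: "(a + b) *\<^sub>C x = a *\<^sub>C x + b *\<^sub>C x"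
    and scaleC_scaleC: "a *\<^sub>C (b *\<^sub>C x) = (a * b) *\<^sub>C x"
    and scaleC_one: "1 *\<^sub>C x = x"

class complex_inner = complex_vector + real_normed_vector +
  fixes cinner :: "'a \<Rightarrow> 'a \<Rightarrow> complex"
  assumes cinner_commute: "cinner x y = cnj (cinner y x)"
    and cinner_add_left: "cinner (x + y) z = cinner x z + cinner y z"
    and cinner_scaleC_left: "cinner (r *\<^sub>C x) y = cnj r * cinner x y"
    and cinner_real: "Im (cinner x x) = 0"
    and cinner_ge_zero: "0 \<le> Re (cinner x x)"
    and cinner_eq_zero_iff: "cinner x x = 0 \<longleftrightarrow> x = 0"
    and norm_eq_sqrt_cinner: "norm x = sqrt (Re (cinner x x))"

class chilbert_space = complex_inner + complete_space

definition clinear :: "('a::complex_vector \<Rightarrow> 'b::complex_vector) \<Rightarrow> bool" where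
  "clinear f \<longleftrightarrow> (\<forall>x y. f (x + y) = f x + f y) \<and> (\<forall>c x. f (c *\<^sub>C x) = c *\<^sub>C f x)"

definition bounded_clinear :: "('a::complex_inner \<Rightarrow> 'b::complex_inner) \<Rightarrow> bool" where
  "bounded_clinear f \<longleftrightarrow> clinear f \<and> (\<exists>K. \<forall>x. norm (f x) \<le> norm x * K)"

definition is_adjoint :: "('a::complex_inner \<Rightarrow> 'a) \<Rightarrow> ('a \<Rightarrow> 'a) \<Rightarrow> bool" where
  "is_adjoint A B \<longleftrightarrow> (\<forall>x y. cinner (A x) y = cinner x (B y))"

text \<open>The (Hilbert space) adjoint of a bounded operator; it exists and is unique by Riesz.\<close>
definition adjoint :: "('a::complex_inner \<Rightarrow> 'a) \<Rightarrow> ('a \<Rightarrow> 'a)" where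
  "adjoint A = (SOME B. is_adjoint A B)"

definition normal_op :: "('a::complex_inner \<Rightarrow> 'a) \<Rightarrow> bool" where
  "normal_op M \<longleftrightarrow> bounded_clinear M \<and> M \<circ> adjoint M = adjoint M \<circ> M"

definition orth_proj :: "('a::complex_inner \<Rightarrow> 'a) \<Rightarrow> bool" where
  "orth_proj P \<longleftrightarrow> bounded_clinear P \<and> P \<circ> P = P \<and> adjoint P = P"

definition irreducible_op :: "('a::complex_inner \<Rightarrow> 'a) \<Rightarrow> bool" where
  "irreducible_op A \<longleftrightarrow>
     (\<forall>P. orth_proj P \<and> P \<circ> A = A \<circ> P \<longrightarrow> P = (\<lambda>_. 0) \<or> P = id)"

definition commuting_normals :: "('a::complex_inner \<Rightarrow> 'a) \<Rightarrow> ('a \<Rightarrow> 'a) set" where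
  "commuting_normals A = {M. normal_op M \<and> A \<circ> M = M \<circ> A}"

end

theory Submission
  imports Defs "HOL-Computational_Algebra.Formal_Power_Series"
begin

instance chilbert_space \<subseteq> banach ..

lemma scaleC_zero_left[simp]: "(0::complex) *\<^sub>C (x::'a::complex_vector) = 0"
  by (metis scaleR_scaleC scaleR_zero_left of_real_0)
lemma scaleC_zero_right[simp]: "a *\<^sub>C (0::'a::complex_vector) = 0"
  using scaleC_add_right[of a 0 0] by simp
lemma scaleC_minus_left: "(- a) *\<^sub>C (x::'a::complex_vector) = - (a *\<^sub>C x)"
proof -
  have "(-a) *\<^sub>C x + a *\<^sub>C x = (-a + a) *\<^sub>C x" by (rule scaleC_add_left[symmetric])
  also have "\<dots> = 0" by simp
  finally have "(-a) *\<^sub>C x + a *\<^sub>C x = 0" .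
  thus ?thesis by (simp add: eq_neg_iff_add_eq_0)
qed
lemma scaleC_minus_right: "a *\<^sub>C (- x::'a::complex_vector) = - (a *\<^sub>C x)"
proof -
  have "a *\<^sub>C x + a *\<^sub>C (-x) = 0" using scaleC_add_right[of a x "-x"] by simp
  from minus_unique[OF this] show ?thesis by simp
qed
lemma scaleC_diff_right: "a *\<^sub>C (x - y::'a::complex_vector) = a *\<^sub>C x - a *\<^sub>C y"
  by (simp only: diff_conv_add_uminus scaleC_add_right scaleC_minus_right)
lemma scaleC_diff_left: "(a - b) *\<^sub>C (x::'a::complex_vector) = a *\<^sub>C x - b *\<^sub>C x"
  by (simp only: diff_conv_add_uminus scaleC_add_left scaleC_minus_left)
lemma scaleC_of_real: "complex_of_real r *\<^sub>C (x::'a::complex_vector) = r *\<^sub>R x"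
  by (simp add: scaleR_scaleC)

lemma cinner_add_right: "cinner z (x + y) = cinner z x + cinner z (y::'a::complex_inner)"
  using cinner_add_left[of x y z] cinner_commute[of z] cinner_commute[of x z] cinner_commute[of y z]
  by (metis complex_cnj_add complex_cnj_cnj)
lemma cinner_scaleC_right: "cinner y (r *\<^sub>C x) = r * cinner y (x::'a::complex_inner)"
  using cinner_scaleC_left[of r x y] cinner_commute[of y "r *\<^sub>C x"] cinner_commute[of x y]
  by simp
lemma cinner_zero_left[simp]: "cinner 0 (x::'a::complex_inner) = 0"
  using cinner_add_left[of 0 0 x] by simp
lemma cinner_zero_right[simp]: "cinner x (0::'a::complex_inner) = 0"
  using cinner_add_right[of x 0 0] by simp
lemma cinner_minus_left: "cinner (- x) (y::'a::complex_inner) = - cinner x y"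
proof -
  have "cinner x y + cinner (-x) y = 0" using cinner_add_left[of x "-x" y] by simp
  from minus_unique[OF this] show ?thesis by simp
qed
lemma cinner_minus_right: "cinner x (- y::'a::complex_inner) = - cinner x y"
proof -
  have "cinner x y + cinner x (-y) = 0" using cinner_add_right[of x y "-y"] by simp
  from minus_unique[OF this] show ?thesis by simp
qed
lemma cinner_diff_left: "cinner (x - y) (z::'a::complex_inner) = cinner x z - cinner y z"
  by (simp only: diff_conv_add_uminus cinner_add_left cinner_minus_left)
lemma cinner_diff_right: "cinner z (x - y::'a::complex_inner) = cinner z x - cinner z y"
  by (simp only: diff_conv_add_uminus cinner_add_right cinner_minus_right)
lemma cinner_scaleR_left: "cinner (r *\<^sub>R x) (y::'a::complex_inner) = of_real r * cinner x y"
  by (simp add: scaleR_scaleC cinner_scaleC_left)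
lemma cinner_scaleR_right: "cinner y (r *\<^sub>R x) = of_real r * cinner y (x::'a::complex_inner)"
  by (simp add: scaleR_scaleC cinner_scaleC_right)

lemma cinner_self: "cinner x (x::'a::complex_inner) = complex_of_real ((norm x)\<^sup>2)"
proof -
  have "cinner x x = complex_of_real (Re (cinner x x))"
    using cinner_real by (simp add: complex_eq_iff)
  moreover have "(norm x)\<^sup>2 = Re (cinner x x)"
    using norm_eq_sqrt_cinner[of x] cinner_ge_zero[of x] by (simp add: real_sqrt_pow2)
  ultimately show ?thesis by simp
qed

lemma Re_cinner_self: "Re (cinner x (x::'a::complex_inner)) = (norm x)\<^sup>2"
  by (simp add: cinner_self)

lemma norm_scaleC[simp]: "norm (a *\<^sub>C (x::'a::complex_inner)) = cmod a * norm x"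
proof -
  have 1: "cinner (a *\<^sub>C x) (a *\<^sub>C x) = cnj a * a * cinner x x"
    by (simp add: cinner_scaleC_left cinner_scaleC_right)
  have e: "cnj a * a = complex_of_real ((cmod a)\<^sup>2)" using complex_norm_square[of a] by (simp add: mult.commute del: of_real_power)
  have 2: "cnj a * a * cinner x x = complex_of_real ((cmod a * norm x)\<^sup>2)"
    by (simp add: e cinner_self power_mult_distrib)
  have "(norm (a *\<^sub>C x))\<^sup>2 = (cmod a * norm x)\<^sup>2"
    using cinner_self[of "a *\<^sub>C x"] 1 2 of_real_eq_iff by metis
  then show ?thesis
    by (metis norm_ge_zero power2_eq_imp_eq mult_nonneg_nonneg)
qed

lemma cinner_eq_zero_all: "(\<And>y. cinner y x = 0) \<Longrightarrow> x = (0::'a::complex_inner)"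
  using cinner_eq_zero_iff by blast

lemma Cauchy_Schwarz: "cmod (cinner x y) \<le> norm x * norm (y::'a::complex_inner)"
proof (cases "x = 0")
  case True then show ?thesis by simp
next
  case False
  define t where "t = cinner x y / complex_of_real ((norm x)\<^sup>2)"
  have nx: "norm x > 0" using False by simp
  have "0 \<le> Re (cinner (y - t *\<^sub>C x) (y - t *\<^sub>C x))" by (rule cinner_ge_zero)
  also have "cinner (y - t *\<^sub>C x) (y - t *\<^sub>C x) =
      cinner y y - t * cinner y x - cnj t * cinner x y + cnj t * t * cinner x x"
    by (simp add: cinner_diff_left cinner_diff_right cinner_scaleC_left cinner_scaleC_right algebra_simps)
  also have "cinner y x = cnj (cinner x y)" by (rule cinner_commute)
  also have "cnj t * t * cinner x x = cnj t * cinner x y"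
    using nx by (simp add: t_def cinner_self field_simps power2_eq_square)
  finally have "0 \<le> Re (cinner y y - t * cnj (cinner x y))" by simp
  also have "t * cnj (cinner x y) = complex_of_real ((cmod (cinner x y))\<^sup>2 / (norm x)\<^sup>2)"
    using complex_norm_square[of "cinner x y"] by (simp add: t_def mult.commute del: of_real_power)
  finally have "(cmod (cinner x y))\<^sup>2 / (norm x)\<^sup>2 \<le> (norm y)\<^sup>2"
    by (simp add: Re_cinner_self)
  then have "(cmod (cinner x y))\<^sup>2 \<le> (norm x * norm y)\<^sup>2"
    using nx by (simp add: field_simps power_mult_distrib)
  then show ?thesis
    by (meson norm_ge_zero mult_nonneg_nonneg power2_le_imp_le)
qed

lemma bounded_bilinear_cinner: "bounded_bilinear (cinner :: 'a::complex_inner \<Rightarrow> 'a \<Rightarrow> complex)"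
proof
  fix a a' b b' :: 'a and r :: real
  show "cinner (a + a') b = cinner a b + cinner a' b" by (rule cinner_add_left)
  show "cinner a (b + b') = cinner a b + cinner a b'" by (rule cinner_add_right)
  show "cinner (r *\<^sub>R a) b = r *\<^sub>R cinner a b" by (simp add: cinner_scaleR_left scaleR_conv_of_real)
  show "cinner a (r *\<^sub>R b) = r *\<^sub>R cinner a b" by (simp add: cinner_scaleR_right scaleR_conv_of_real)
  show "\<exists>K. \<forall>a b. norm (cinner a b) \<le> norm a * norm b * K"
    by (rule exI[of _ 1]) (simp add: Cauchy_Schwarz)
qed

lemmas tendsto_cinner = bounded_bilinear.tendsto[OF bounded_bilinear_cinner]
lemmas continuous_on_cinner = bounded_bilinear.continuous_on[OF bounded_bilinear_cinner]

lemma clinear_linear: "clinear f \<Longrightarrow> linear f"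
  unfolding clinear_def by (intro linearI) (auto simp: scaleR_scaleC)

lemma bounded_clinear_bounded_linear: "bounded_clinear f \<Longrightarrow> bounded_linear f"
  unfolding bounded_clinear_def
  by (auto intro!: bounded_linear_intro[where K=K for K] dest: clinear_linear simp: linear_add linear_scale)

lemma bcl_add: "bounded_clinear f \<Longrightarrow> f (x + y) = f x + f y"
  unfolding bounded_clinear_def clinear_def by blast
lemma bcl_scaleC: "bounded_clinear f \<Longrightarrow> f (c *\<^sub>C x) = c *\<^sub>C f x"
  unfolding bounded_clinear_def clinear_def by blast
lemma bcl_linear: "bounded_clinear f \<Longrightarrow> linear f"
  by (simp add: bounded_clinear_bounded_linear bounded_linear.linear)
lemma bcl_zero: "bounded_clinear f \<Longrightarrow> f 0 = 0"
  by (simp add: bcl_linear linear_0)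
lemma bcl_minus: "bounded_clinear f \<Longrightarrow> f (- x) = - f x"
  by (simp add: bcl_linear linear_neg)
lemma bcl_diff: "bounded_clinear f \<Longrightarrow> f (x - y) = f x - f y"
  by (simp add: bcl_linear linear_diff)
lemma bcl_scaleR: "bounded_clinear f \<Longrightarrow> f (r *\<^sub>R x) = r *\<^sub>R f x"
  by (simp add: bcl_linear linear_scale)
lemma bcl_bound: "bounded_clinear f \<Longrightarrow> \<exists>K>0. \<forall>x. norm (f x) \<le> norm x * K"
  using bounded_clinear_bounded_linear bounded_linear.pos_bounded by blast
lemma bcl_onorm: "bounded_clinear f \<Longrightarrow> norm (f x) \<le> onorm f * norm x"
  using bounded_clinear_bounded_linear onorm by blast
lemma bcl_continuous: "bounded_clinear f \<Longrightarrow> continuous_on S f"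
  using bounded_clinear_bounded_linear linear_continuous_on by blast
lemma bcl_tendsto: "bounded_clinear f \<Longrightarrow> (g \<longlongrightarrow> l) F \<Longrightarrow> ((\<lambda>x. f (g x)) \<longlongrightarrow> f l) F"
  using bounded_clinear_bounded_linear bounded_linear.tendsto by blast

lemma bounded_clinearI:
  assumes "\<And>x y. f (x + y) = f x + f y" "\<And>c x. f (c *\<^sub>C x) = c *\<^sub>C f x"
    "\<And>x. norm (f x) \<le> norm x * K"
  shows "bounded_clinear f"
  unfolding bounded_clinear_def clinear_def using assms by blast

lemma bcl_ident: "bounded_clinear (\<lambda>x::'a::complex_inner. x)"
  by (rule bounded_clinearI[where K=1]) auto
lemma bcl_id: "bounded_clinear (id::'a::complex_inner \<Rightarrow> 'a)"
  using bcl_ident by (simp add: id_def)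
lemma bcl_const0: "bounded_clinear (\<lambda>x::'a::complex_inner. 0::'b::complex_inner)"
  by (rule bounded_clinearI[where K=0]) auto
lemma bcl_smult: "bounded_clinear (\<lambda>x::'a::complex_inner. c *\<^sub>C x)"
  by (rule bounded_clinearI[where K="cmod c"]) (auto simp: scaleC_add_right scaleC_scaleC mult.commute)
lemma bcl_plus: "bounded_clinear f \<Longrightarrow> bounded_clinear g \<Longrightarrow> bounded_clinear (\<lambda>x. f x + g x)"
proof -
  assume f: "bounded_clinear f" and g: "bounded_clinear g"
  obtain K1 where K1: "\<forall>x. norm (f x) \<le> norm x * K1" using bcl_bound[OF f] by blast
  obtain K2 where K2: "\<forall>x. norm (g x) \<le> norm x * K2" using bcl_bound[OF g] by blast
  show ?thesis
  proof (rule bounded_clinearI[where K="K1+K2"])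
    fix x show "norm (f x + g x) \<le> norm x * (K1 + K2)"
      using norm_triangle_ineq[of "f x" "g x"] K1 K2 by (smt (verit) distrib_left)
  qed (auto simp: bcl_add[OF f] bcl_add[OF g] bcl_scaleC[OF f] bcl_scaleC[OF g] scaleC_add_right)
qed
lemma bcl_uminus: "bounded_clinear f \<Longrightarrow> bounded_clinear (\<lambda>x. - f x)"
proof -
  assume f: "bounded_clinear f"
  obtain K1 where K1: "\<forall>x. norm (f x) \<le> norm x * K1" using bcl_bound[OF f] by blast
  show ?thesis
    by (rule bounded_clinearI[where K="K1"]) (auto simp: bcl_add[OF f] bcl_scaleC[OF f] scaleC_minus_right K1)
qed
lemma bcl_minus_fun: "bounded_clinear f \<Longrightarrow> bounded_clinear g \<Longrightarrow> bounded_clinear (\<lambda>x. f x - g x)"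
  using bcl_plus[of f "\<lambda>x. - g x"] bcl_uminus[of g] by simp
lemma bcl_compose: "bounded_clinear f \<Longrightarrow> bounded_clinear g \<Longrightarrow> bounded_clinear (\<lambda>x. f (g x))"
proof -
  assume f: "bounded_clinear f" and g: "bounded_clinear g"
  obtain K1 where K1: "K1 > 0" "\<forall>x. norm (f x) \<le> norm x * K1" using bcl_bound[OF f] by blast
  obtain K2 where K2: "\<forall>x. norm (g x) \<le> norm x * K2" using bcl_bound[OF g] by blast
  show ?thesis
  proof (rule bounded_clinearI[where K="K2*K1"])
    fix x
    have "norm (f (g x)) \<le> norm (g x) * K1" using K1 by blast
    also have "\<dots> \<le> norm x * K2 * K1" using K2 K1(1) by (simp add: mult_right_mono)
    finally show "norm (f (g x)) \<le> norm x * (K2 * K1)" by (simp add: mult.assoc)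
  qed (auto simp: bcl_add[OF f] bcl_add[OF g] bcl_scaleC[OF f] bcl_scaleC[OF g])
qed
lemma bcl_comp: "bounded_clinear f \<Longrightarrow> bounded_clinear g \<Longrightarrow> bounded_clinear (f \<circ> g)"
  using bcl_compose[of f g] by (simp add: comp_def)
lemma bcl_funpow:
  fixes f :: "'a::complex_inner \<Rightarrow> 'a"
  assumes "bounded_clinear f" shows "bounded_clinear (f ^^ n)"
proof (induction n)
  case 0 show ?case using bcl_ident by (simp add: id_def)
next
  case (Suc n) show ?case using bcl_compose[OF assms Suc] by (simp add: comp_def)
qed
lemma funpow_commute: "(\<And>x. B (N x) = N (B x)) \<Longrightarrow> B ((N ^^ n) x) = (N ^^ n) (B x)"
  by (induction n) auto

lemma is_adjointD: "is_adjoint A B \<Longrightarrow> cinner (A x) y = cinner x (B y)"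
  unfolding is_adjoint_def by blast

lemma is_adjoint_sym: "is_adjoint A B \<Longrightarrow> is_adjoint B (A::'a::complex_inner \<Rightarrow> 'a)"
  unfolding is_adjoint_def by (metis cinner_commute)

lemma is_adjoint_unique: "is_adjoint A B \<Longrightarrow> is_adjoint A C \<Longrightarrow> B = (C::'a::complex_inner \<Rightarrow> 'a)"
proof
  fix y assume B: "is_adjoint A B" and C: "is_adjoint A C"
  have "\<And>x. cinner x (B y - C y) = 0"
    using is_adjointD[OF B] is_adjointD[OF C] by (simp add: cinner_diff_right)
  from cinner_eq_zero_all[OF this] show "B y = C y" by simp
qed

lemma adjoint_eqI: "is_adjoint A B \<Longrightarrow> adjoint A = (B::'a::complex_inner \<Rightarrow> 'a)"
  unfolding adjoint_def by (metis (mono_tags) is_adjoint_unique someI_ex)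

lemma is_adjoint_clinear:
  assumes "is_adjoint A (B::'a::complex_inner \<Rightarrow> 'a)"
  shows "B (x + y) = B x + B y" "B (c *\<^sub>C x) = c *\<^sub>C B x"
proof -
  have "\<And>z. cinner z (B (x + y) - (B x + B y)) = 0"
    using is_adjointD[OF assms, symmetric] by (simp add: cinner_diff_right cinner_add_right)
  from cinner_eq_zero_all[OF this] show "B (x + y) = B x + B y" by simp
  have "\<And>z. cinner z (B (c *\<^sub>C x) - c *\<^sub>C B x) = 0"
    using is_adjointD[OF assms, symmetric] by (simp add: cinner_diff_right cinner_scaleC_right)
  from cinner_eq_zero_all[OF this] show "B (c *\<^sub>C x) = c *\<^sub>C B x" by simp
qed

lemma is_adjoint_bounded:
  assumes A: "bounded_clinear A" and B: "is_adjoint A (B::'a::complex_inner \<Rightarrow> 'a)"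
  shows "bounded_clinear B"
proof -
  obtain K where K: "K > 0" "\<forall>x. norm (A x) \<le> norm x * K" using bcl_bound[OF A] by blast
  show ?thesis
  proof (rule bounded_clinearI[where K=K])
    fix y
    have "(norm (B y))\<^sup>2 = cmod (cinner (B y) (B y))"
      by (simp add: cinner_self del: of_real_power)
    also have "cinner (B y) (B y) = cinner (A (B y)) y" using is_adjointD[OF B] by simp
    also have "cmod \<dots> \<le> norm (A (B y)) * norm y" by (rule Cauchy_Schwarz)
    also have "\<dots> \<le> norm (B y) * K * norm y" using K by (simp add: mult_right_mono)
    finally have "(norm (B y))\<^sup>2 \<le> norm (B y) * (norm y * K)" by (simp add: mult_ac)
    then show "norm (B y) \<le> norm y * K"
      using K(1) by (cases "norm (B y) = 0") (auto simp: power2_eq_square)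
  qed (use is_adjoint_clinear[OF B] in auto)
qed

definition csub :: "'a::complex_vector set \<Rightarrow> bool" where
  "csub K \<longleftrightarrow> 0 \<in> K \<and> (\<forall>x\<in>K. \<forall>y\<in>K. x + y \<in> K) \<and> (\<forall>c. \<forall>x\<in>K. c *\<^sub>C x \<in> K)"

lemma csub_diff: "csub K \<Longrightarrow> x \<in> K \<Longrightarrow> y \<in> K \<Longrightarrow> x - y \<in> K"
  unfolding csub_def by (metis diff_conv_add_uminus scaleC_minus_left scaleC_one)

lemma parallelogram:
  "(norm (u + v))\<^sup>2 + (norm (u - v))\<^sup>2 = 2 * (norm u)\<^sup>2 + 2 * (norm (v::'a::complex_inner))\<^sup>2"
proof -
  have "cinner (u+v) (u+v) + cinner (u-v) (u-v) = 2 * cinner u u + 2 * cinner v v"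
    by (simp add: cinner_add_left cinner_add_right cinner_diff_left cinner_diff_right)
  from arg_cong[OF this, of Re] show ?thesis by (simp add: Re_cinner_self)
qed

lemma norm_sq_diff_scaleC:
  "(norm (w - a *\<^sub>C k))\<^sup>2 = (norm w)\<^sup>2 - 2 * Re (cnj a * cinner k w) + (cmod a)\<^sup>2 * (norm (k::'a::complex_inner))\<^sup>2"
proof -
  have "cinner (w - a *\<^sub>C k) (w - a *\<^sub>C k) =
      cinner w w - (cnj a * cinner k w + cnj (cnj a * cinner k w)) + cnj a * a * cinner k k"
    by (simp add: cinner_diff_left cinner_diff_right cinner_scaleC_left cinner_scaleC_right
        cinner_commute[of w k] algebra_simps)
  then have "Re (cinner (w - a *\<^sub>C k) (w - a *\<^sub>C k)) =
      Re (cinner w w) - 2 * Re (cnj a * cinner k w) + Re (cnj a * a * cinner k k)" by simp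
  moreover have "Re (cnj a * a * cinner k k) = (cmod a)\<^sup>2 * (norm k)\<^sup>2"
  proof -
    have e: "cnj a * a = complex_of_real ((cmod a)\<^sup>2)"
      using complex_norm_square[of a] by (simp add: mult.commute del: of_real_power)
    show ?thesis by (simp only: e cinner_self of_real_mult[symmetric] Re_complex_of_real)
  qed
  ultimately show ?thesis by (simp add: Re_cinner_self)
qed

lemma projection_exists:
  fixes x :: "'a::chilbert_space"
  assumes cl: "closed K" and sub: "csub K"
  shows "\<exists>p\<in>K. \<forall>k\<in>K. cinner k (x - p) = 0"
proof -
  define f where "f = (\<lambda>k. (norm (x - k))\<^sup>2)"
  define D where "D = Inf (f ` K)"
  have ne: "K \<noteq> {}" using sub by (auto simp: csub_def)
  have bdd: "bdd_below (f ` K)" by (auto intro: bdd_belowI[of _ 0] simp: f_def)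
  have Dle: "\<And>k. k \<in> K \<Longrightarrow> D \<le> f k" unfolding D_def using bdd by (simp add: cINF_lower)
  have "\<forall>n. \<exists>k\<in>K. f k < D + inverse (real (Suc n))"
  proof
    fix n
    have "Inf (f ` K) < D + inverse (real (Suc n))" by (simp add: D_def)
    from cInf_lessD[OF _ this] ne show "\<exists>k\<in>K. f k < D + inverse (real (Suc n))" by auto
  qed
  then obtain kk where kk: "\<And>n. kk n \<in> K" "\<And>n. f (kk n) < D + inverse (real (Suc n))" by metis
  have sq: "(norm (kk m - kk n))\<^sup>2 \<le> 2 * inverse (real (Suc m)) + 2 * inverse (real (Suc n))" for m n
  proof -
    define u where "u = x - kk m"
    define v where "v = x - kk n"
    define mid where "mid = (1/2::real) *\<^sub>R (kk m + kk n)"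
    have "mid \<in> K" using sub kk(1)[of m] kk(1)[of n]
      unfolding mid_def csub_def by (metis scaleR_scaleC)
    then have "D \<le> f mid" by (rule Dle)
    have "u + v = 2 *\<^sub>R (x - mid)" by (simp add: u_def v_def mid_def algebra_simps scaleR_2)
    then have "(norm (u + v))\<^sup>2 = 4 * f mid" by (simp add: f_def power_mult_distrib)
    moreover have "u - v = kk n - kk m" by (simp add: u_def v_def)
    moreover have "(norm (kk n - kk m)) = norm (kk m - kk n)" by (rule norm_minus_commute)
    ultimately have "(norm (kk m - kk n))\<^sup>2 = 2 * f (kk m) + 2 * f (kk n) - 4 * f mid"
      using parallelogram[of u v] by (simp add: f_def u_def v_def)
    then show ?thesis using kk(2)[of m] kk(2)[of n] \<open>D \<le> f mid\<close> by linarith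
  qed
  have "Cauchy kk"
  proof (rule metric_CauchyI)
    fix e :: real assume "e > 0"
    then have "e\<^sup>2 / 4 > 0" by simp
    then obtain M where M: "inverse (real (Suc M)) < e\<^sup>2 / 4" using reals_Archimedean by blast
    have "dist (kk m) (kk n) < e" if "m \<ge> M" "n \<ge> M" for m n
    proof -
      have im: "inverse (real (Suc m)) \<le> inverse (real (Suc M))" using that
        by (simp add: le_imp_inverse_le)
      have iN: "inverse (real (Suc n)) \<le> inverse (real (Suc M))" using that
        by (simp add: le_imp_inverse_le)
      have "(norm (kk m - kk n))\<^sup>2 < e\<^sup>2" using sq[of m n] im iN M by linarith
      then show ?thesis using \<open>e > 0\<close> by (simp add: dist_norm power_less_imp_less_base)
    qed
    then show "\<exists>M. \<forall>m\<ge>M. \<forall>n\<ge>M. dist (kk m) (kk n) < e" by blast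
  qed
  then obtain p where p: "kk \<longlonglongrightarrow> p" using Cauchy_convergent_iff convergent_def by blast
  have pK: "p \<in> K" using closed_sequentially[OF cl] kk(1) p by blast
  have "(\<lambda>n. f (kk n)) \<longlonglongrightarrow> f p" unfolding f_def by (intro tendsto_intros p)
  moreover have "(\<lambda>n. D + inverse (real (Suc n))) \<longlonglongrightarrow> D" by (rule LIMSEQ_inverse_real_of_nat_add)
  ultimately have "f p \<le> D" using kk(2) by (intro LIMSEQ_le[where X="\<lambda>n. f (kk n)"]) (auto intro: less_imp_le)
  then have pmin: "\<And>k. k \<in> K \<Longrightarrow> f p \<le> f k" using Dle by fastforce
  have "cinner k (x - p) = 0" if kK: "k \<in> K" for k
  proof -
    define w where "w = x - p"
    define c where "c = cinner k w"
    define s where "s = 1 / ((norm k)\<^sup>2 + 1)"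
    have s0: "s > 0" unfolding s_def by (simp add: add_nonneg_pos)
    have sk: "s * (norm k)\<^sup>2 < 1" unfolding s_def
      by (simp add: add_nonneg_pos divide_less_eq)
    define a where "a = complex_of_real s * c"
    have "p + a *\<^sub>C k \<in> K" using sub pK kK unfolding csub_def by blast
    then have "f p \<le> f (p + a *\<^sub>C k)" by (rule pmin)
    also have "f (p + a *\<^sub>C k) = (norm (w - a *\<^sub>C k))\<^sup>2" by (simp add: f_def w_def algebra_simps)
    also have "\<dots> = (norm w)\<^sup>2 - 2 * Re (cnj a * c) + (cmod a)\<^sup>2 * (norm k)\<^sup>2"
      by (simp add: norm_sq_diff_scaleC c_def)
    also have "Re (cnj a * c) = s * (cmod c)\<^sup>2"
    proof -
      have e: "cnj c * c = complex_of_real ((cmod c)\<^sup>2)"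
        using complex_norm_square[of c] by (simp add: mult.commute del: of_real_power)
      have "cnj a * c = complex_of_real s * (cnj c * c)" by (simp add: a_def mult.assoc)
      also have "\<dots> = complex_of_real (s * (cmod c)\<^sup>2)" by (simp only: e of_real_mult)
      finally show ?thesis by (simp only: Re_complex_of_real)
    qed
    also have "(cmod a)\<^sup>2 = s\<^sup>2 * (cmod c)\<^sup>2" using s0 by (simp add: a_def norm_mult power_mult_distrib)
    finally have "2 * (s * (cmod c)\<^sup>2) \<le> s\<^sup>2 * (cmod c)\<^sup>2 * (norm k)\<^sup>2"
      by (simp add: f_def w_def)
    then have "s * (2 * (cmod c)\<^sup>2) \<le> s * ((cmod c)\<^sup>2 * (s * (norm k)\<^sup>2))"
      by (simp add: power2_eq_square mult_ac)
    then have "2 * (cmod c)\<^sup>2 \<le> (cmod c)\<^sup>2 * (s * (norm k)\<^sup>2)" using s0 by simp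
    also have "\<dots> \<le> (cmod c)\<^sup>2" using sk by (simp add: mult_left_le)
    finally have "(cmod c)\<^sup>2 \<le> 0" by simp
    then show ?thesis by (simp add: c_def w_def)
  qed
  then show ?thesis using pK by blast
qed

lemma riesz:
  fixes f :: "'a::chilbert_space \<Rightarrow> complex"
  assumes fadd: "\<And>x y. f (x + y) = f x + f y" and fsc: "\<And>c x. f (c *\<^sub>C x) = c * f x"
    and fb: "\<And>x. norm (f x) \<le> norm x * K"
  shows "\<exists>z. \<forall>x. f x = cinner z x"
proof (cases "\<forall>x. f x = 0")
  case True then show ?thesis by (intro exI[of _ 0]) simp
next
  case False
  then obtain y where y: "f y \<noteq> 0" by blast
  define Ker where "Ker = {x. f x = 0}"
  have bl: "bounded_linear f"
  proof (rule bounded_linear_intro[where K=K])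
    show "f (r *\<^sub>R x) = r *\<^sub>R f x" for r x using fsc[of "complex_of_real r" x]
      by (simp add: scaleR_scaleC scaleR_conv_of_real)
  qed (use fadd fb in auto)
  have f0: "f 0 = 0" using fadd[of 0 0] by simp
  have fdiff: "f (a - b) = f a - f b" for a b using bl by (simp add: linear_diff bounded_linear.linear)
  have cl: "closed Ker" unfolding Ker_def
    by (intro closed_Collect_eq continuous_on_const linear_continuous_on bl)
  have sub: "csub Ker" unfolding Ker_def csub_def using fadd fsc f0 by simp
  obtain p where p: "p \<in> Ker" "\<And>k. k \<in> Ker \<Longrightarrow> cinner k (y - p) = 0"
    using projection_exists[OF cl sub] by blast
  define w where "w = y - p"
  have fw: "f w = f y" using p(1) by (simp add: w_def Ker_def fdiff)
  then have w0: "w \<noteq> 0" using y f0 by auto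
  have nw: "norm w \<noteq> 0" using w0 by simp
  show ?thesis
  proof (intro exI allI)
    fix x
    define v where "v = f x *\<^sub>C w - f w *\<^sub>C x"
    have "f v = 0" by (simp add: v_def fdiff fsc)
    then have "cinner v w = 0" using p(2)[of v] by (simp add: Ker_def w_def)
    then have "cnj (f x) * cinner w w - cnj (f w) * cinner x w = 0"
      by (simp add: v_def cinner_diff_left cinner_scaleC_left)
    then have "f x * cinner w w = f w * cinner w x"
      by (metis (no_types, lifting) cinner_commute complex_cnj_cnj complex_cnj_diff complex_cnj_mult
          complex_cnj_zero eq_iff_diff_eq_0)
    then have "f x * complex_of_real ((norm w)\<^sup>2) = f w * cinner w x" by (simp add: cinner_self)
    then show "f x = cinner ((cnj (f w) / complex_of_real ((norm w)\<^sup>2)) *\<^sub>C w) x"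
      using nw by (simp add: cinner_scaleC_left field_simps)
  qed
qed

lemma adjoint_exists:
  fixes A :: "'a::chilbert_space \<Rightarrow> 'a"
  assumes A: "bounded_clinear A"
  shows "is_adjoint A (adjoint A)"
proof -
  obtain K where K: "K > 0" "\<forall>x. norm (A x) \<le> norm x * K" using bcl_bound[OF A] by blast
  have "\<exists>z. \<forall>x. cinner y (A x) = cinner z x" for y
  proof (rule riesz[where K="norm y * K"])
    show "norm (cinner y (A x)) \<le> norm x * (norm y * K)" for x
    proof -
      have "cmod (cinner y (A x)) \<le> norm y * norm (A x)" by (rule Cauchy_Schwarz)
      also have "\<dots> \<le> norm y * (norm x * K)" using K by (simp add: mult_left_mono)
      finally show ?thesis by (simp add: mult_ac)
    qed
  qed (simp_all add: bcl_add[OF A] bcl_scaleC[OF A] cinner_add_right cinner_scaleC_right)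
  then obtain B where B: "\<And>y x. cinner y (A x) = cinner (B y) x" by metis
  have "is_adjoint A B" unfolding is_adjoint_def
    by (metis B cinner_commute)
  then show ?thesis unfolding adjoint_def using someI[of "is_adjoint A" B] by blast
qed

lemma logconvex_growth:
  fixes g :: "nat \<Rightarrow> real"
  assumes nn: "\<And>n. g n \<ge> 0"
    and lc: "\<And>n. (g (Suc n))\<^sup>2 \<le> g n * g (Suc (Suc n))"
    and bd: "\<And>n. g n \<le> C * c ^ n" and c0: "c \<ge> 0"
  shows "g n \<le> c ^ n * g 0"
proof (rule ccontr)
  assume neg: "\<not> g n \<le> c ^ n * g 0"
  have "\<exists>k. g (Suc k) > c * g k"
  proof (rule ccontr)
    assume "\<nexists>k. g (Suc k) > c * g k"
    then have st: "\<And>k. g (Suc k) \<le> c * g k" by (simp add: not_less)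
    have "g m \<le> c ^ m * g 0" for m
    proof (induction m)
      case (Suc m)
      have "g (Suc m) \<le> c * g m" by (rule st)
      also have "\<dots> \<le> c * (c ^ m * g 0)" using Suc c0 by (simp add: mult_left_mono)
      finally show ?case by (simp add: mult.assoc)
    qed simp
    with neg show False by blast
  qed
  then obtain k where k: "g (Suc k) > c * g k" by blast
  have gk: "g k > 0"
  proof (rule ccontr)
    assume "\<not> g k > 0"
    then have "g k = 0" using nn[of k] by simp
    then have "(g (Suc k))\<^sup>2 \<le> 0" using lc[of k] by simp
    then have "g (Suc k) = 0" by simp
    with k \<open>g k = 0\<close> show False by simp
  qed
  define r where "r = g (Suc k) / g k"
  have rc: "r > c" using k gk by (simp add: r_def pos_less_divide_eq mult.commute)
  have r0: "r > 0" using rc c0 by simp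
  have step: "g (k + m) \<ge> r ^ m * g k \<and> g (Suc (k + m)) \<ge> r * g (k + m)" for m
  proof (induction m)
    case 0 show ?case using gk by (simp add: r_def)
  next
    case (Suc m)
    have pos: "g (k + m) > 0" using Suc r0 gk
      by (metis less_le_trans mult_pos_pos zero_less_power)
    have A: "g (k + Suc m) \<ge> r ^ Suc m * g k"
    proof -
      have "r ^ Suc m * g k = r * (r ^ m * g k)" by simp
      also have "\<dots> \<le> r * g (k + m)" using Suc r0 by (simp add: mult_left_mono)
      also have "\<dots> \<le> g (Suc (k + m))" using Suc by simp
      finally show ?thesis by simp
    qed
    have "g (k + m) * (r * g (Suc (k + m))) \<le> g (Suc (k + m)) * g (Suc (k + m))"
    proof -
      have "g (k + m) * (r * g (Suc (k + m))) = (r * g (k + m)) * g (Suc (k + m))" by simp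
      also have "\<dots> \<le> g (Suc (k + m)) * g (Suc (k + m))"
        using Suc nn by (simp add: mult_right_mono)
      finally show ?thesis .
    qed
    also have "\<dots> \<le> g (k + m) * g (Suc (Suc (k + m)))" using lc[of "k + m"] by (simp add: power2_eq_square)
    finally have "r * g (Suc (k + m)) \<le> g (Suc (Suc (k + m)))"
      using pos by (simp add: mult_le_cancel_left_pos)
    then show ?case using A by simp
  qed
  show False
  proof (cases "c = 0")
    case True
    have "r ^ 1 * g k \<le> g (k + 1)" using step[of 1] by simp
    also have "\<dots> \<le> C * c ^ (k + 1)" by (rule bd)
    finally have "r * g k \<le> 0" using True by simp
    then show False using mult_pos_pos[OF r0 gk] by linarith
  next
    case False
    then have cp: "c > 0" using c0 by simp
    have "1 < r / c" using rc cp by simp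
    then obtain m where m: "C * c ^ k / g k < (r / c) ^ m" using real_arch_pow by blast
    have "r ^ m * g k \<le> C * c ^ (k + m)" using step[of m] bd[of "k + m"] by linarith
    then have "(r / c) ^ m * g k \<le> C * c ^ k"
      using cp by (simp add: power_divide power_add field_simps)
    then have "(r / c) ^ m \<le> C * c ^ k / g k" using gk by (simp add: field_simps)
    with m show False by simp
  qed
qed

section \<open>Normal operators and their disc subspaces\<close>

lemma is_adjoint_funpow:
  assumes "is_adjoint N N'"
  shows "is_adjoint (N ^^ n) (N' ^^ n)"
proof (induction n)
  case 0 show ?case by (simp add: is_adjoint_def)
next
  case (Suc n)
  show ?case unfolding is_adjoint_def
  proof (intro allI)
    fix x y
    have "cinner ((N ^^ Suc n) x) y = cinner (N ((N ^^ n) x)) y" by simp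
    also have "\<dots> = cinner ((N ^^ n) x) (N' y)" using is_adjointD[OF assms] by simp
    also have "\<dots> = cinner x ((N' ^^ n) (N' y))" using is_adjointD[OF Suc] by simp
    also have "(N' ^^ n) (N' y) = (N' ^^ Suc n) y" by (simp add: funpow_swap1)
    finally show "cinner ((N ^^ Suc n) x) y = cinner x ((N' ^^ Suc n) y)" .
  qed
qed

lemma normal_norm_eq:
  fixes N :: "'a::complex_inner \<Rightarrow> 'a"
  assumes adj: "is_adjoint N N'" and comm: "\<And>x. N (N' x) = N' (N x)"
  shows "norm (N' v) = norm (N v)"
proof -
  have 1: "cinner (N v) (N v) = cinner v (N' (N v))" using is_adjointD[OF adj] by simp
  have 2: "cinner (N (N' v)) v = cinner (N' v) (N' v)" using is_adjointD[OF adj] by simp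
  have "cinner (N v) (N v) = cinner v (N (N' v))" using 1 comm by simp
  also have "\<dots> = cnj (cinner (N (N' v)) v)" by (rule cinner_commute)
  also have "\<dots> = cnj (cinner (N' v) (N' v))" using 2 by simp
  finally have "cinner (N v) (N v) = cnj (cinner (N' v) (N' v))" .
  then have "Re (cinner (N v) (N v)) = Re (cinner (N' v) (N' v))" by simp
  then show ?thesis by (simp add: Re_cinner_self)
qed

lemma normal_logconvex:
  fixes N :: "'a::complex_inner \<Rightarrow> 'a"
  assumes adj: "is_adjoint N N'" and comm: "\<And>x. N (N' x) = N' (N x)"
  shows "(norm (N y))\<^sup>2 \<le> norm y * norm (N (N y))"
proof -
  have "(norm (N y))\<^sup>2 = Re (cinner (N y) (N y))" by (simp add: Re_cinner_self)
  also have "\<dots> = Re (cinner y (N' (N y)))" using is_adjointD[OF adj] by simp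
  also have "\<dots> \<le> cmod (cinner y (N' (N y)))" by (rule complex_Re_le_cmod)
  also have "\<dots> \<le> norm y * norm (N' (N y))" by (rule Cauchy_Schwarz)
  also have "norm (N' (N y)) = norm (N (N y))" by (rule normal_norm_eq[OF adj comm])
  finally show ?thesis .
qed

definition disc_space :: "('a::complex_inner \<Rightarrow> 'a) \<Rightarrow> real \<Rightarrow> 'a set" where
  "disc_space N c = {x. \<forall>n. norm ((N ^^ n) x) \<le> c ^ n * norm x}"

locale normal_pair =
  fixes N N' :: "'a::chilbert_space \<Rightarrow> 'a"
  assumes bN: "bounded_clinear N"
    and adj: "is_adjoint N N'"
    and comm: "\<And>x. N (N' x) = N' (N x)"
begin

lemma bN': "bounded_clinear N'" using is_adjoint_bounded[OF bN adj] .

lemma pow_comm: "(N ^^ n) ((N' ^^ n) x) = (N' ^^ n) ((N ^^ n) x)"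
proof -
  have c1: "\<And>y. N' ((N ^^ n) y) = (N ^^ n) (N' y)" by (rule funpow_commute) (use comm in auto)
  have "(N ^^ n) ((N' ^^ n) x) = (N' ^^ n) ((N ^^ n) x)" by (rule funpow_commute) (use c1 in auto)
  then show ?thesis .
qed

lemma pow_norm_eq: "norm ((N' ^^ n) v) = norm ((N ^^ n) v)"
proof -
  have a: "is_adjoint (N ^^ n) (N' ^^ n)" by (rule is_adjoint_funpow[OF adj])
  have c: "\<And>x. (N ^^ n) ((N' ^^ n) x) = (N' ^^ n) ((N ^^ n) x)" by (rule pow_comm)
  show ?thesis using normal_norm_eq[of "N ^^ n" "N' ^^ n", OF a c] .
qed

lemma disc_space_adj: "disc_space N' c = disc_space N c"
  unfolding disc_space_def using pow_norm_eq by simp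

lemma growth:
  assumes "c \<ge> 0" "\<And>n. norm ((N ^^ n) z) \<le> C * c ^ n"
  shows "z \<in> disc_space N c"
proof -
  have "norm ((N ^^ n) z) \<le> c ^ n * norm ((N ^^ 0) z)" for n
  proof (rule logconvex_growth[where g="\<lambda>n. norm ((N ^^ n) z)" and C=C])
    show "(norm ((N ^^ Suc m) z))\<^sup>2 \<le> norm ((N ^^ m) z) * norm ((N ^^ Suc (Suc m)) z)" for m
      using normal_logconvex[OF adj comm, of "(N ^^ m) z"] by simp
  qed (use assms in auto)
  then show ?thesis by (simp add: disc_space_def)
qed

lemma disc_closed: "closed (disc_space N c)"
proof -
  have "disc_space N c = (\<Inter>n. {x. norm ((N ^^ n) x) \<le> c ^ n * norm x})"
    by (auto simp: disc_space_def)
  moreover have "closed {x. norm ((N ^^ n) x) \<le> c ^ n * norm x}" for n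
    by (intro closed_Collect_le continuous_intros continuous_on_norm
        bcl_continuous[OF bcl_funpow[OF bN]])
  ultimately show ?thesis by auto
qed

lemma disc_invariant:
  assumes c0: "c \<ge> 0" and B: "bounded_clinear B" and BN: "\<And>x. B (N x) = N (B x)"
    and x: "x \<in> disc_space N c"
  shows "B x \<in> disc_space N c"
proof -
  obtain K where K: "K > 0" "\<forall>x. norm (B x) \<le> norm x * K" using bcl_bound[OF B] by blast
  show ?thesis
  proof (rule growth[OF c0, where C="K * norm x"])
    fix n
    have "(N ^^ n) (B x) = B ((N ^^ n) x)" using funpow_commute[of B N n x] BN by simp
    then have "norm ((N ^^ n) (B x)) \<le> norm ((N ^^ n) x) * K" using K by simp
    also have "\<dots> \<le> c ^ n * norm x * K" using x K by (simp add: disc_space_def mult_right_mono)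
    finally show "norm ((N ^^ n) (B x)) \<le> K * norm x * c ^ n" by (simp add: mult_ac)
  qed
qed

lemma disc_csub:
  assumes c0: "c \<ge> 0"
  shows "csub (disc_space N c)"
  unfolding csub_def
proof (intro conjI ballI allI)
  show "0 \<in> disc_space N c" by (simp add: disc_space_def bcl_zero[OF bcl_funpow[OF bN]])
next
  fix x y assume x: "x \<in> disc_space N c" and y: "y \<in> disc_space N c"
  show "x + y \<in> disc_space N c"
  proof (rule growth[OF c0, where C="norm x + norm y"])
    fix n
    have "norm ((N ^^ n) (x + y)) \<le> norm ((N ^^ n) x) + norm ((N ^^ n) y)"
      by (simp add: bcl_add[OF bcl_funpow[OF bN]] norm_triangle_ineq)
    also have "\<dots> \<le> c ^ n * norm x + c ^ n * norm y" using x y by (simp add: disc_space_def add_mono)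
    finally show "norm ((N ^^ n) (x + y)) \<le> (norm x + norm y) * c ^ n" by (simp add: algebra_simps)
  qed
next
  fix a x assume x: "x \<in> disc_space N c"
  show "a *\<^sub>C x \<in> disc_space N c"
    unfolding disc_space_def
  proof (intro CollectI allI)
    fix n
    have "norm ((N ^^ n) (a *\<^sub>C x)) = cmod a * norm ((N ^^ n) x)"
      by (simp add: bcl_scaleC[OF bcl_funpow[OF bN]])
    also have "\<dots> \<le> cmod a * (c ^ n * norm x)"
      using x by (intro mult_left_mono) (auto simp: disc_space_def)
    finally show "norm ((N ^^ n) (a *\<^sub>C x)) \<le> c ^ n * norm (a *\<^sub>C x)" by (simp add: mult_ac)
  qed
qed

end

section \<open>Orthogonal projections onto reducing subspaces\<close>

definition projK :: "'a::chilbert_space set \<Rightarrow> 'a \<Rightarrow> 'a" where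
  "projK K x = (SOME p. p \<in> K \<and> (\<forall>k\<in>K. cinner k (x - p) = 0))"

lemma projK_char:
  assumes "closed K" "csub K"
  shows "projK K x \<in> K" "\<And>k. k \<in> K \<Longrightarrow> cinner k (x - projK K x) = 0"
proof -
  have "\<exists>p. p \<in> K \<and> (\<forall>k\<in>K. cinner k (x - p) = 0)" using projection_exists[OF assms, of x] by blast
  from someI_ex[OF this] show "projK K x \<in> K" "\<And>k. k \<in> K \<Longrightarrow> cinner k (x - projK K x) = 0"
    unfolding projK_def by blast+
qed

lemma projK_unique:
  assumes cs: "closed K" "csub K" and p: "p \<in> K" "\<And>k. k \<in> K \<Longrightarrow> cinner k (x - p) = 0"
  shows "projK K x = p"
proof -
  let ?q = "projK K x"
  have q: "?q \<in> K" "\<And>k. k \<in> K \<Longrightarrow> cinner k (x - ?q) = 0" using projK_char[OF cs] by auto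
  have d: "p - ?q \<in> K" using csub_diff[OF cs(2) p(1) q(1)] .
  have "cinner (p - ?q) (p - ?q) = cinner (p - ?q) (x - ?q) - cinner (p - ?q) (x - p)"
    by (simp add: cinner_diff_right)
  also have "\<dots> = 0" using p(2)[OF d] q(2)[OF d] by simp
  finally have "p - ?q = 0" using cinner_eq_zero_iff by blast
  then show ?thesis by simp
qed

lemma reducing_trivial:
  fixes A :: "'a::chilbert_space \<Rightarrow> 'a"
  assumes irr: "irreducible_op A" and bA: "bounded_clinear A" and adjA: "is_adjoint A A'"
    and cs: "closed K" "csub K"
    and inv: "\<And>x. x \<in> K \<Longrightarrow> A x \<in> K" and inv': "\<And>x. x \<in> K \<Longrightarrow> A' x \<in> K"
  shows "K = {0} \<or> K = UNIV"
proof -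
  define P where "P = projK K"
  have PK: "P x \<in> K" for x using projK_char[OF cs] by (simp add: P_def)
  have Po: "cinner k (x - P x) = 0" if "k \<in> K" for x k using projK_char[OF cs] that by (simp add: P_def)
  have Pu: "P x = p" if "p \<in> K" "\<And>k. k \<in> K \<Longrightarrow> cinner k (x - p) = 0" for x p
    using projK_unique[OF cs that] by (simp add: P_def)
  have Pid: "P k = k" if "k \<in> K" for k using Pu[OF that] by simp
  have Padd: "P (x + y) = P x + P y" for x y
  proof (rule Pu)
    show "P x + P y \<in> K" using cs(2) PK by (simp add: csub_def)
    fix k assume k: "k \<in> K"
    have "cinner k (x + y - (P x + P y)) = cinner k (x - P x) + cinner k (y - P y)"
      by (simp add: cinner_diff_right cinner_add_right)
    then show "cinner k (x + y - (P x + P y)) = 0" using Po[OF k] by simp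
  qed
  have Psc: "P (c *\<^sub>C x) = c *\<^sub>C P x" for c x
  proof (rule Pu)
    show "c *\<^sub>C P x \<in> K" using cs(2) PK by (simp add: csub_def)
    fix k assume k: "k \<in> K"
    have "cinner k (c *\<^sub>C x - c *\<^sub>C P x) = c * cinner k (x - P x)"
      by (simp add: cinner_diff_right cinner_scaleC_right right_diff_distrib)
    then show "cinner k (c *\<^sub>C x - c *\<^sub>C P x) = 0" using Po[OF k] by simp
  qed
  have Pnorm: "norm (P x) \<le> norm x * 1" for x
  proof -
    have "cinner (P x) (x - P x) = 0" using Po[OF PK] .
    then have e: "cinner (P x) (P x) = cinner (P x) x" by (simp add: cinner_diff_right)
    have "(norm (P x))\<^sup>2 = cmod (cinner (P x) (P x))" by (simp add: cinner_self del: of_real_power)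
    also have "\<dots> \<le> norm (P x) * norm x" unfolding e by (rule Cauchy_Schwarz)
    finally show ?thesis by (cases "norm (P x) = 0") (auto simp: power2_eq_square)
  qed
  have bP: "bounded_clinear P" by (rule bounded_clinearI[OF Padd Psc Pnorm])
  have PP: "P \<circ> P = P" using Pid PK by (auto simp: fun_eq_iff)
  have aux: "cinner (P x) y = cinner (P x) (P y)" for x y
  proof -
    have "cinner (P x) (y - P y) = 0" using Po[OF PK] .
    then show ?thesis by (simp add: cinner_diff_right)
  qed
  have adjP: "is_adjoint P P" unfolding is_adjoint_def
  proof (intro allI)
    fix x y
    have "cinner x (P y) = cnj (cinner (P y) x)" by (rule cinner_commute)
    also have "\<dots> = cnj (cinner (P y) (P x))" by (simp only: aux[of y x])
    also have "\<dots> = cinner (P x) (P y)" by (rule cinner_commute[symmetric])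
    finally show "cinner (P x) y = cinner x (P y)" by (simp only: aux[of x y])
  qed
  have oP: "orth_proj P" unfolding orth_proj_def using bP PP adjoint_eqI[OF adjP] by simp
  have PA: "P (A x) = A (P x)" for x
  proof (rule Pu)
    show "A (P x) \<in> K" using inv PK by simp
    fix k assume k: "k \<in> K"
    have "cinner k (A x - A (P x)) = cinner k (A (x - P x))" by (simp add: bcl_diff[OF bA])
    also have "\<dots> = cnj (cinner (A (x - P x)) k)" by (rule cinner_commute)
    also have "\<dots> = cnj (cinner (x - P x) (A' k))" using is_adjointD[OF adjA] by simp
    also have "\<dots> = cinner (A' k) (x - P x)" by (rule cinner_commute[symmetric])
    also have "\<dots> = 0" using Po[OF inv'[OF k]] .
    finally show "cinner k (A x - A (P x)) = 0" .
  qed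
  have "P \<circ> A = A \<circ> P" using PA by (auto simp: fun_eq_iff)
  then have "P = (\<lambda>_. 0) \<or> P = id" using irr oP unfolding irreducible_op_def by blast
  then show ?thesis
  proof
    assume "P = (\<lambda>_. 0)"
    then have "\<And>k. k \<in> K \<Longrightarrow> k = 0" using Pid by (metis (no_types))
    then have "K = {0}" using cs(2) by (auto simp: csub_def)
    then show ?thesis ..
  next
    assume "P = id"
    then have "\<And>x. x \<in> K" using PK by (metis (no_types) id_apply)
    then show ?thesis by blast
  qed
qed

section \<open>Coefficients of the square root series\<close>

definition cf :: "nat \<Rightarrow> real" where "cf k = ((1/2::real) gchoose k) * (-1) ^ k"

lemma gch_rec: "(a gchoose Suc k) = (a gchoose k) * (a - of_nat k) / of_nat (Suc k)"
  for a :: real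
proof -
  have "(a gchoose Suc k) * fact (Suc k) = (\<Prod>i = 0..<Suc k. a - of_nat i)"
    by (rule gbinomial_mult_fact')
  also have "\<dots> = (\<Prod>i = 0..<k. a - of_nat i) * (a - of_nat k)" by simp
  also have "\<dots> = (a gchoose k) * (a - of_nat k) * fact k" by (simp add: gbinomial_mult_fact')
  finally have "((a gchoose Suc k) * of_nat (Suc k)) * fact k = ((a gchoose k) * (a - of_nat k)) * fact k"
    by (simp add: algebra_simps)
  then have "(a gchoose Suc k) * of_nat (Suc k) = (a gchoose k) * (a - of_nat k)"
    by (metis fact_nonzero mult_right_cancel)
  then show ?thesis by (simp add: field_simps)
qed

lemma cf_0: "cf 0 = 1" by (simp add: cf_def)

lemma cf_Suc: "cf (Suc k) = cf k * (of_nat k - 1/2) / of_nat (Suc k)"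
  unfolding cf_def gch_rec by (simp add: field_simps)

lemma cf_nonpos: "k \<ge> 1 \<Longrightarrow> cf k \<le> 0"
proof (induction k)
  case 0 then show ?case by simp
next
  case (Suc k)
  show ?case
  proof (cases "k = 0")
    case True then show ?thesis by (simp add: cf_Suc cf_0)
  next
    case False
    then have "cf k \<le> 0" using Suc by simp
    moreover have "(of_nat k - 1/2::real) \<ge> 0" using False by simp
    ultimately show ?thesis unfolding cf_Suc
      by (simp add: divide_nonpos_pos mult_nonpos_nonneg)
  qed
qed

definition bb :: "nat \<Rightarrow> real" where "bb m = (-1) ^ m * ((-1/2::real) gchoose m)"

lemma bb_nonneg: "bb m \<ge> 0"
proof (induction m)
  case 0 then show ?case by (simp add: bb_def)
next
  case (Suc m)
  have "bb (Suc m) = bb m * (of_nat m + 1/2) / of_nat (Suc m)"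
    unfolding bb_def gch_rec by (simp add: field_simps)
  then show ?case using Suc by simp
qed

lemma cf_partial: "(\<Sum>k\<le>m. cf k) = bb m"
  unfolding cf_def bb_def using gbinomial_sum_lower_neg[of "1/2::real" m] by simp

lemma cf_partial_nonneg: "(\<Sum>k<n. cf k) \<ge> 0"
proof (cases n)
  case 0 then show ?thesis by simp
next
  case (Suc m)
  then have "{..<n} = {..m}" by auto
  then show ?thesis using cf_partial[of m] bb_nonneg[of m] by simp
qed

lemma abs_cf: "\<bar>cf k\<bar> = (if k = 0 then 2 * cf k - cf k else - cf k)"
  using cf_nonpos[of k] by (auto simp: cf_0)

lemma sum_abs_cf: "(\<Sum>k<n. \<bar>cf k\<bar>) \<le> 2"
proof (cases n)
  case 0 then show ?thesis by simp
next
  case (Suc m)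
  have "(\<Sum>k<n. \<bar>cf k\<bar>) = (\<Sum>k<n. (if k = 0 then 2 else 0) - cf k)"
    using cf_nonpos by (intro sum.cong) (auto simp: cf_0)
  also have "\<dots> = (\<Sum>k<n. (if k = 0 then 2 else 0)) - (\<Sum>k<n. cf k)" by (simp add: sum_subtractf)
  also have "(\<Sum>k<n. (if k = 0 then 2 else (0::real))) = 2" using Suc by (simp add: sum.delta)
  finally show ?thesis using cf_partial_nonneg[of n] by simp
qed

lemma summable_abs_cf: "summable (\<lambda>k. \<bar>cf k\<bar>)"
  by (rule summableI_nonneg_bounded[where x=2]) (auto simp: sum_abs_cf)

lemma summable_cf: "summable cf"
  using summable_abs_cf by (rule summable_rabs_cancel)

lemma suminf_cf_nonneg: "suminf cf \<ge> 0"
proof -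
  have "(\<lambda>n. \<Sum>k<n. cf k) \<longlonglongrightarrow> suminf cf" using summable_cf by (rule summable_LIMSEQ)
  then show ?thesis using cf_partial_nonneg by (intro LIMSEQ_le_const) auto
qed

lemma cf_prod: "i \<le> n \<Longrightarrow> cf i * cf (n - i) = ((1/2::real) gchoose i) * ((1/2::real) gchoose (n - i)) * (-1) ^ n"
proof -
  assume "i \<le> n"
  then have "(-1::real) ^ i * (-1) ^ (n - i) = (-1) ^ n" by (simp flip: power_add)
  then show ?thesis unfolding cf_def by (metis (no_types, lifting) mult.assoc mult.left_commute)
qed

lemma cf_square: "(\<Sum>i\<le>n. cf i * cf (n - i)) = (if n = 0 then 1 else if n = 1 then -1 else 0)"
proof -
  have "(\<Sum>i\<le>n. cf i * cf (n - i)) = (\<Sum>i=0..n. ((1/2::real) gchoose i) * ((1/2) gchoose (n - i)) * (-1) ^ n)"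
    unfolding atMost_atLeast0 by (intro sum.cong refl) (simp add: cf_prod)
  also have "\<dots> = (\<Sum>i=0..n. ((1/2::real) gchoose i) * ((1/2) gchoose (n - i))) * (-1) ^ n"
    by (simp add: sum_distrib_right)
  also have "(\<Sum>i=0..n. ((1/2::real) gchoose i) * ((1/2) gchoose (n - i))) = (1/2 + 1/2) gchoose n"
    by (rule gbinomial_Vandermonde)
  also have "((1/2 + 1/2::real) gchoose n) = of_nat (1 choose n)"
    using binomial_gbinomial[of 1 n, where 'a=real] by simp
  finally show ?thesis
    by (cases n; cases "n - 1") (auto simp: binomial_eq_0)
qed

section \<open>Cauchy product for bounded bilinear maps\<close>

lemma Cauchy_product_sums_bil:
  fixes a :: "nat \<Rightarrow> 'a::banach" and b :: "nat \<Rightarrow> 'b::banach"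
  assumes bil: "bounded_bilinear bl"
    and a: "summable (\<lambda>k. norm (a k))"
    and b: "summable (\<lambda>k. norm (b k))"
  shows "(\<lambda>k. \<Sum>i\<le>k. bl (a i) (b (k - i))) sums (bl (\<Sum>k. a k) (\<Sum>k. b k) :: 'c::real_normed_vector)"
proof -
  obtain K where K: "K \<ge> 0" "\<And>x y. norm (bl x y) \<le> norm x * norm y * K"
    using bounded_bilinear.nonneg_bounded[OF bil] by blast
  let ?S1 = "\<lambda>n::nat. {..<n} \<times> {..<n}"
  let ?S2 = "\<lambda>n::nat. {(i,j). i + j < n}"
  have S1_mono: "\<And>m n. m \<le> n \<Longrightarrow> ?S1 m \<subseteq> ?S1 n" by auto
  have S2_le_S1: "\<And>n. ?S2 n \<subseteq> ?S1 n" by auto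
  have S1_le_S2: "\<And>n. ?S1 (n div 2) \<subseteq> ?S2 n" by auto
  have finite_S1: "\<And>n. finite (?S1 n)" by simp
  with S2_le_S1 have finite_S2: "\<And>n. finite (?S2 n)" by (rule finite_subset)
  let ?g = "\<lambda>(i,j). bl (a i) (b j)"
  let ?f = "\<lambda>(i,j). norm (a i) * norm (b j) * K"
  have f_nonneg: "\<And>x. 0 \<le> ?f x" using K by auto
  then have norm_sum_f: "\<And>A. norm (sum ?f A) = sum ?f A"
    unfolding real_norm_def by (simp only: abs_of_nonneg sum_nonneg [rule_format])
  have gS1: "sum ?g (?S1 n) = bl (\<Sum>k<n. a k) (\<Sum>k<n. b k)" for n
  proof -
    have "bl (\<Sum>k<n. a k) (\<Sum>k<n. b k) = (\<Sum>i<n. \<Sum>j<n. bl (a i) (b j))"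
      by (subst bounded_bilinear.sum_left[OF bil]) (simp only: bounded_bilinear.sum_right[OF bil])
    also have "\<dots> = sum ?g (?S1 n)" by (simp add: sum.cartesian_product)
    finally show ?thesis by simp
  qed
  have fS1: "sum ?f (?S1 n) = (\<Sum>k<n. norm (a k)) * (\<Sum>k<n. norm (b k)) * K" for n
  proof -
    have "(\<Sum>k<n. norm (a k)) * (\<Sum>k<n. norm (b k)) * K = (\<Sum>i<n. \<Sum>j<n. norm (a i) * norm (b j)) * K"
      by (simp only: sum_product)
    also have "\<dots> = (\<Sum>i<n. \<Sum>j<n. norm (a i) * norm (b j) * K)"
      by (simp only: sum_distrib_right)
    also have "\<dots> = sum ?f (?S1 n)" by (simp add: sum.cartesian_product)
    finally show ?thesis by simp
  qed
  have "(\<lambda>n. bl (\<Sum>k<n. a k) (\<Sum>k<n. b k)) \<longlonglongrightarrow> bl (\<Sum>k. a k) (\<Sum>k. b k)"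
    by (intro bounded_bilinear.tendsto[OF bil] summable_LIMSEQ summable_norm_cancel [OF a] summable_norm_cancel [OF b])
  then have 1: "(\<lambda>n. sum ?g (?S1 n)) \<longlonglongrightarrow> bl (\<Sum>k. a k) (\<Sum>k. b k)"
    by (simp only: gS1)
  have "(\<lambda>n. (\<Sum>k<n. norm (a k)) * (\<Sum>k<n. norm (b k)) * K) \<longlonglongrightarrow> (\<Sum>k. norm (a k)) * (\<Sum>k. norm (b k)) * K"
    using a b by (intro tendsto_mult tendsto_const summable_LIMSEQ)
  then have "(\<lambda>n. sum ?f (?S1 n)) \<longlonglongrightarrow> (\<Sum>k. norm (a k)) * (\<Sum>k. norm (b k)) * K"
    by (simp only: fS1)
  then have "convergent (\<lambda>n. sum ?f (?S1 n))"
    by (rule convergentI)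
  then have Cauchy: "Cauchy (\<lambda>n. sum ?f (?S1 n))"
    by (rule convergent_Cauchy)
  have "Zfun (\<lambda>n. sum ?f (?S1 n - ?S2 n)) sequentially"
  proof (rule ZfunI, simp only: eventually_sequentially norm_sum_f)
    fix r :: real
    assume r: "0 < r"
    from CauchyD [OF Cauchy r] obtain N
      where "\<forall>m\<ge>N. \<forall>n\<ge>N. norm (sum ?f (?S1 m) - sum ?f (?S1 n)) < r" ..
    then have "\<And>m n. N \<le> n \<Longrightarrow> n \<le> m \<Longrightarrow> norm (sum ?f (?S1 m - ?S1 n)) < r"
      by (simp only: sum_diff finite_S1 S1_mono)
    then have N: "\<And>m n. N \<le> n \<Longrightarrow> n \<le> m \<Longrightarrow> sum ?f (?S1 m - ?S1 n) < r"
      by (simp only: norm_sum_f)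
    show "\<exists>N. \<forall>n\<ge>N. sum ?f (?S1 n - ?S2 n) < r"
    proof (intro exI allI impI)
      fix n
      assume "2 * N \<le> n"
      then have n: "N \<le> n div 2" by simp
      have "sum ?f (?S1 n - ?S2 n) \<le> sum ?f (?S1 n - ?S1 (n div 2))"
        by (intro sum_mono2 finite_Diff finite_S1 f_nonneg Diff_mono subset_refl S1_le_S2)
      also have "\<dots> < r"
        using n div_le_dividend by (rule N)
      finally show "sum ?f (?S1 n - ?S2 n) < r" .
    qed
  qed
  then have "Zfun (\<lambda>n. sum ?g (?S1 n - ?S2 n)) sequentially"
    apply (rule Zfun_le [rule_format])
    apply (simp only: norm_sum_f)
    apply (rule order_trans [OF norm_sum sum_mono])
    apply (auto simp add: K)
    done
  then have 2: "(\<lambda>n. sum ?g (?S1 n) - sum ?g (?S2 n)) \<longlonglongrightarrow> 0"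
    unfolding tendsto_Zfun_iff diff_0_right
    by (simp only: sum_diff finite_S1 S2_le_S1)
  with 1 have "(\<lambda>n. sum ?g (?S2 n)) \<longlonglongrightarrow> bl (\<Sum>k. a k) (\<Sum>k. b k)"
    by (rule Lim_transform2)
  then show ?thesis
    by (simp only: sums_def sum.triangle_reindex)
qed

locale sa_contr =
  fixes Z :: "'a::chilbert_space \<Rightarrow> 'a"
  assumes bZ: "bounded_clinear Z" and saZ: "is_adjoint Z Z" and cZ: "\<And>x. norm (Z x) \<le> norm x"
begin

definition X where "X x = x - Z (Z x)"

lemma bX: "bounded_clinear X"
  unfolding X_def[abs_def] by (rule bcl_minus_fun[OF bcl_ident bcl_compose[OF bZ bZ]])

lemma saX: "is_adjoint X X"
  unfolding is_adjoint_def X_def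
proof (intro allI)
  fix x y
  have "cinner (Z (Z x)) y = cinner x (Z (Z y))" using is_adjointD[OF saZ] by simp
  then show "cinner (x - Z (Z x)) y = cinner x (y - Z (Z y))"
    by (simp add: cinner_diff_left cinner_diff_right)
qed

lemma nX: "norm (X x) \<le> norm x"
proof -
  have "(norm (X x))\<^sup>2 = (norm (x - 1 *\<^sub>C Z (Z x)))\<^sup>2" by (simp add: X_def scaleC_one)
  also have "\<dots> = (norm x)\<^sup>2 - 2 * Re (cnj 1 * cinner (Z (Z x)) x) + (cmod 1)\<^sup>2 * (norm (Z (Z x)))\<^sup>2"
    by (rule norm_sq_diff_scaleC)
  also have "cinner (Z (Z x)) x = cinner (Z x) (Z x)" using is_adjointD[OF saZ] by simp
  also have "Re (cnj 1 * cinner (Z x) (Z x)) = (norm (Z x))\<^sup>2" by (simp add: Re_cinner_self)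
  finally have e: "(norm (X x))\<^sup>2 = (norm x)\<^sup>2 - 2 * (norm (Z x))\<^sup>2 + (norm (Z (Z x)))\<^sup>2" by simp
  have "norm (Z (Z x)) \<le> norm (Z x)" by (rule cZ)
  then have "(norm (Z (Z x)))\<^sup>2 \<le> (norm (Z x))\<^sup>2" by (rule power_mono) simp
  moreover have "(norm (Z x))\<^sup>2 \<ge> 0" by simp
  ultimately have "(norm (X x))\<^sup>2 \<le> (norm x)\<^sup>2" using e by linarith
  then show ?thesis by (rule power2_le_imp_le) simp
qed

lemma nXp: "norm ((X ^^ k) x) \<le> norm x"
proof (induction k)
  case (Suc k)
  have "norm ((X ^^ Suc k) x) = norm (X ((X ^^ k) x))" by simp
  also have "\<dots> \<le> norm ((X ^^ k) x)" by (rule nX)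
  finally show ?case using Suc by simp
qed simp

definition tm where "tm k x = cf k *\<^sub>R (X ^^ k) x"

lemma tm_norm: "norm (tm k x) \<le> \<bar>cf k\<bar> * norm x"
  unfolding tm_def using nXp[of k x] by (simp add: mult_left_mono)

lemma summable_tm_norm: "summable (\<lambda>k. norm (tm k x))"
proof (rule summable_comparison_test')
  show "summable (\<lambda>k. \<bar>cf k\<bar> * norm x)" using summable_abs_cf by (rule summable_mult2)
  show "norm (norm (tm n x)) \<le> \<bar>cf n\<bar> * norm x" for n using tm_norm by simp
qed

lemma summable_tm: "summable (\<lambda>k. tm k x)"
  using summable_tm_norm by (rule summable_norm_cancel)

definition W where "W x = (\<Sum>k. tm k x)"

lemma X_commute:
  assumes B: "bounded_clinear B" and BZ: "\<And>x. B (Z x) = Z (B x)"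
  shows "B (X x) = X (B x)"
  by (simp add: X_def bcl_diff[OF B] BZ)

lemma W_commute:
  assumes B: "bounded_clinear B" and BZ: "\<And>x. B (Z x) = Z (B x)"
  shows "B (W x) = W (B x)"
proof -
  have BX: "\<And>x. B (X x) = X (B x)" by (rule X_commute[OF B BZ])
  have "B (W x) = (\<Sum>k. B (tm k x))"
    unfolding W_def by (rule bounded_linear.suminf[OF bounded_clinear_bounded_linear[OF B] summable_tm])
  also have "(\<lambda>k. B (tm k x)) = (\<lambda>k. tm k (B x))"
  proof
    fix k
    have "B ((X ^^ k) x) = (X ^^ k) (B x)" by (rule funpow_commute) (rule BX)
    then show "B (tm k x) = tm k (B x)" by (simp add: tm_def bcl_scaleR[OF B])
  qed
  finally show ?thesis by (simp add: W_def)
qed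

lemma W_add: "W (x + y) = W x + W y"
proof -
  have "(\<lambda>k. tm k (x + y)) = (\<lambda>k. tm k x + tm k y)"
    by (simp add: tm_def bcl_add[OF bcl_funpow[OF bX]] scaleR_add_right)
  then show ?thesis unfolding W_def using suminf_add[OF summable_tm summable_tm] by simp
qed

lemma W_scaleC: "W (c *\<^sub>C x) = c *\<^sub>C W x"
  using W_commute[OF bcl_smult[of c], of x] by (simp add: bcl_scaleC[OF bZ])

lemma W_norm: "norm (W x) \<le> norm x * 2"
proof -
  have "norm (W x) \<le> (\<Sum>k. norm (tm k x))" unfolding W_def by (rule summable_norm[OF summable_tm_norm])
  also have "\<dots> \<le> (\<Sum>k. \<bar>cf k\<bar> * norm x)"
    by (intro suminf_le summable_tm_norm summable_mult2 summable_abs_cf tm_norm)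
  also have "\<dots> = (\<Sum>k. \<bar>cf k\<bar>) * norm x" by (rule suminf_mult2[OF summable_abs_cf, symmetric])
  also have "(\<Sum>k. \<bar>cf k\<bar>) \<le> 2" by (rule suminf_le_const[OF summable_abs_cf sum_abs_cf])
  then have "(\<Sum>k. \<bar>cf k\<bar>) * norm x \<le> 2 * norm x" by (simp add: mult_right_mono)
  finally show ?thesis by (simp add: mult.commute)
qed

lemma bW: "bounded_clinear W"
  by (rule bounded_clinearI[OF W_add W_scaleC W_norm])

lemma cinner_W_left: "cinner (W x) y = (\<Sum>k. cinner (tm k x) y)"
  unfolding W_def
  by (rule bounded_linear.suminf[OF bounded_bilinear.bounded_linear_left[OF bounded_bilinear_cinner] summable_tm])

lemma cinner_W_right: "cinner y (W x) = (\<Sum>k. cinner y (tm k x))"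
  unfolding W_def
  by (rule bounded_linear.suminf[OF bounded_bilinear.bounded_linear_right[OF bounded_bilinear_cinner] summable_tm])

lemma saXp: "is_adjoint (X ^^ k) (X ^^ k)" by (rule is_adjoint_funpow[OF saX])

lemma saW: "is_adjoint W W"
  unfolding is_adjoint_def
proof (intro allI)
  fix x y
  have "cinner (tm k x) y = cinner x (tm k y)" for k
    using is_adjointD[OF saXp] by (simp add: tm_def cinner_scaleR_left cinner_scaleR_right)
  then show "cinner (W x) y = cinner x (W y)" by (simp add: cinner_W_left cinner_W_right)
qed

lemma W_pos: "Re (cinner (W x) x) \<ge> 0"
proof -
  define r where "r k = Re (cinner ((X ^^ k) x) x)" for k
  have sc: "summable (\<lambda>k. cinner (tm k x) x)"
    by (rule bounded_linear.summable[OF bounded_bilinear.bounded_linear_left[OF bounded_bilinear_cinner] summable_tm])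
  have "Re (cinner (W x) x) = (\<Sum>k. Re (cinner (tm k x) x))"
    unfolding cinner_W_left by (rule bounded_linear.suminf[OF bounded_linear_Re sc])
  also have "(\<lambda>k. Re (cinner (tm k x) x)) = (\<lambda>k. cf k * r k)"
    by (simp add: tm_def cinner_scaleR_left r_def)
  finally have e: "Re (cinner (W x) x) = (\<Sum>k. cf k * r k)" .
  have r0: "r 0 = (norm x)\<^sup>2" by (simp add: r_def Re_cinner_self)
  have rle: "r k \<le> (norm x)\<^sup>2" for k
  proof -
    have "r k \<le> cmod (cinner ((X ^^ k) x) x)" unfolding r_def by (rule complex_Re_le_cmod)
    also have "\<dots> \<le> norm ((X ^^ k) x) * norm x" by (rule Cauchy_Schwarz)
    also have "\<dots> \<le> norm x * norm x" by (simp add: mult_right_mono nXp)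
    finally show ?thesis by (simp add: power2_eq_square)
  qed
  have le: "cf k * (norm x)\<^sup>2 \<le> cf k * r k" for k
  proof (cases "k = 0")
    case True then show ?thesis by (simp add: r0)
  next
    case False
    then have "cf k \<le> 0" using cf_nonpos by simp
    then show ?thesis using rle[of k] by (simp add: mult_left_mono_neg)
  qed
  have s1: "summable (\<lambda>k. cf k * (norm x)\<^sup>2)" by (rule summable_mult2[OF summable_cf])
  have s2: "summable (\<lambda>k. cf k * r k)"
  proof -
    have "summable (\<lambda>k. Re (cinner (tm k x) x))"
      by (rule bounded_linear.summable[OF bounded_linear_Re sc])
    then show ?thesis by (simp add: tm_def cinner_scaleR_left r_def)
  qed
  have "(\<Sum>k. cf k * (norm x)\<^sup>2) \<le> (\<Sum>k. cf k * r k)" by (rule suminf_le[OF le s1 s2])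
  moreover have "(\<Sum>k. cf k * (norm x)\<^sup>2) = (\<Sum>k. cf k) * (norm x)\<^sup>2"
    by (rule suminf_mult2[OF summable_cf, symmetric])
  moreover have "(\<Sum>k. cf k) * (norm x)\<^sup>2 \<ge> 0" using suminf_cf_nonneg by simp
  ultimately show ?thesis using e by linarith
qed

lemma W_sq: "W (W x) = Z (Z x)"
proof -
  have "cinner y (W (W x) - Z (Z x)) = 0" for y
  proof -
    have "cinner y (W (W x)) = cinner (W y) (W x)" using is_adjointD[OF saW] by simp
    also have "\<dots> = (\<Sum>n. \<Sum>i\<le>n. cinner (tm i y) (tm (n - i) x))"
      unfolding W_def
      by (rule sums_unique[OF Cauchy_product_sums_bil[OF bounded_bilinear_cinner summable_tm_norm summable_tm_norm]])
    also have "(\<lambda>n. \<Sum>i\<le>n. cinner (tm i y) (tm (n - i) x)) =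
        (\<lambda>n. (if n = 0 then 1 else if n = 1 then -1 else 0) * cinner y ((X ^^ n) x))"
    proof
      fix n
      have t: "cinner (tm i y) (tm (n - i) x) = complex_of_real (cf i * cf (n - i)) * cinner y ((X ^^ n) x)"
        if "i \<le> n" for i
      proof -
        have "cinner ((X ^^ i) y) ((X ^^ (n - i)) x) = cinner y ((X ^^ i) ((X ^^ (n - i)) x))"
          using is_adjointD[OF saXp] by simp
        also have "(X ^^ i) ((X ^^ (n - i)) x) = (X ^^ n) x"
        proof -
          have "X ^^ n = X ^^ i \<circ> X ^^ (n - i)" using that by (simp flip: funpow_add)
          then show ?thesis by simp
        qed
        finally show ?thesis by (simp add: tm_def cinner_scaleR_left cinner_scaleR_right)
      qed
      have "(\<Sum>i\<le>n. cinner (tm i y) (tm (n - i) x)) =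
          (\<Sum>i\<le>n. complex_of_real (cf i * cf (n - i)) * cinner y ((X ^^ n) x))"
        by (intro sum.cong refl) (simp add: t)
      also have "\<dots> = complex_of_real (\<Sum>i\<le>n. cf i * cf (n - i)) * cinner y ((X ^^ n) x)"
        by (simp add: sum_distrib_right)
      also have "\<dots> = (if n = 0 then 1 else if n = 1 then -1 else 0) * cinner y ((X ^^ n) x)"
        by (simp only: cf_square) simp
      finally show "(\<Sum>i\<le>n. cinner (tm i y) (tm (n - i) x)) =
          (if n = 0 then 1 else if n = 1 then -1 else 0) * cinner y ((X ^^ n) x)" .
    qed
    also have "(\<Sum>n. (if n = 0 then 1 else if n = 1 then -1 else 0) * cinner y ((X ^^ n) x)) =
        (\<Sum>n\<in>{0,1}. (if n = 0 then 1 else if n = 1 then -1 else 0) * cinner y ((X ^^ n) x))"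
      by (rule suminf_finite) auto
    also have "\<dots> = cinner y x - cinner y (X x)" by simp
    also have "\<dots> = cinner y (Z (Z x))" by (simp add: X_def cinner_diff_right)
    finally show ?thesis by (simp add: cinner_diff_right)
  qed
  from cinner_eq_zero_all[OF this] show ?thesis by simp
qed

lemma WZ: "W (Z x) = Z (W x)"
  using W_commute[OF bZ, of x] by simp

end

lemma scaleR_scaleC_commute: "r *\<^sub>R (c *\<^sub>C x) = c *\<^sub>C (r *\<^sub>R (x::'a::complex_vector))"
  by (simp add: scaleR_scaleC scaleC_scaleC mult.commute)

lemma bcl_scaleR_fun: "bounded_clinear f \<Longrightarrow> bounded_clinear (\<lambda>x. r *\<^sub>R f x)"
  using bcl_compose[OF bcl_smult[of "complex_of_real r"], of f] by (simp add: scaleR_scaleC)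

lemma polarization_zero:
  fixes Q :: "'a::complex_inner \<Rightarrow> 'a"
  assumes add: "\<And>x y. Q (x + y) = Q x + Q y" and sc: "\<And>c x. Q (c *\<^sub>C x) = c *\<^sub>C Q x"
    and z: "\<And>z. cinner z (Q z) = 0"
  shows "Q y = 0"
proof -
  let ?x = "Q y"
  have 1: "cinner ?x (Q y) + cinner y (Q ?x) = 0"
    using z[of "?x + y"] z[of ?x] z[of y] by (simp add: add cinner_add_left cinner_add_right) (metis add.commute)
  have 2: "\<i> * cinner ?x (Q y) - \<i> * cinner y (Q ?x) = 0"
    using z[of "?x + \<i> *\<^sub>C y"] z[of ?x] z[of y]
    by (simp add: add sc cinner_add_left cinner_add_right cinner_scaleC_left cinner_scaleC_right)
  have "cinner ?x (Q y) - cinner y (Q ?x) = 0"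
  proof -
    have "\<i> * (cinner ?x (Q y) - cinner y (Q ?x)) = 0" using 2 by (simp add: right_diff_distrib)
    then show ?thesis by simp
  qed
  with 1 have "cinner ?x ?x = 0" by (simp add: algebra_simps)
  then show ?thesis using cinner_eq_zero_iff by blast
qed

context normal_pair
begin

lemma adj': "is_adjoint N' N" by (rule is_adjoint_sym[OF adj])

lemma scalar_NN:
  assumes triv: "\<And>c. c \<ge> 0 \<Longrightarrow> disc_space N c = {0} \<or> disc_space N c = UNIV"
  shows "\<exists>s. \<forall>x. N' (N x) = s *\<^sub>R x"
proof -
  define P where "P x = N' (N x)" for x
  define S where "S = (onorm N)\<^sup>2"
  have bP: "bounded_clinear P" unfolding P_def[abs_def] by (rule bcl_compose[OF bN' bN])
  have f1: "cinner (P x) x = cinner (N x) (N x)" for x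
    unfolding P_def using is_adjointD[OF adj'] by simp
  have f1': "cinner x (P y) = cinner (N x) (N y)" for x y
    unfolding P_def using is_adjointD[OF adj] by simp
  have Re_f1: "Re (cinner (P x) x) = (norm (N x))\<^sup>2" for x by (simp add: f1 Re_cinner_self)
  have onN: "onorm N \<ge> 0" by (rule onorm_pos_le[OF bounded_clinear_bounded_linear[OF bN]])
  have f2: "norm (N x) \<le> onorm N * norm x" for x by (rule bcl_onorm[OF bN])
  have f3: "(norm (N x))\<^sup>2 \<le> S * (norm x)\<^sup>2" for x
  proof -
    have "(norm (N x))\<^sup>2 \<le> (onorm N * norm x)\<^sup>2" by (rule power_mono[OF f2]) simp
    then show ?thesis by (simp add: S_def power_mult_distrib)
  qed
  have f4: "norm (P x) \<le> onorm N * norm (N x)" for x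
  proof -
    have "norm (P x) = norm (N (N x))" unfolding P_def by (rule normal_norm_eq[OF adj comm])
    also have "\<dots> \<le> onorm N * norm (N x)" by (rule f2)
    finally show ?thesis .
  qed
  have f5: "(norm (P x))\<^sup>2 \<le> S * (norm (N x))\<^sup>2" for x
  proof -
    have "(norm (P x))\<^sup>2 \<le> (onorm N * norm (N x))\<^sup>2" by (rule power_mono[OF f4]) simp
    then show ?thesis by (simp add: S_def power_mult_distrib)
  qed
  have main: "S * (norm y)\<^sup>2 \<le> Re (cinner (P y) y)" for y
  proof (rule ccontr)
    assume "\<not> S * (norm y)\<^sup>2 \<le> Re (cinner (P y) y)"
    then have lt: "Re (cinner (P y) y) < S * (norm y)\<^sup>2" by simp
    have y0: "y \<noteq> 0" using lt by auto
    have ny: "(norm y)\<^sup>2 > 0" using y0 by simp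
    define q where "q = Re (cinner (P y) y) / (norm y)\<^sup>2"
    have q0: "q \<ge> 0" unfolding q_def by (simp add: Re_f1)
    have qS: "q < S" unfolding q_def using lt ny by (simp add: divide_less_eq)
    define d where "d = (max q (S/2) + S) / 2"
    have dq: "d > q" and dS2: "2 * d \<ge> S" and dS: "d < S" and d0: "d > 0"
      using q0 qS by (auto simp: d_def max_def)
    define Z0 where "Z0 x = x - (1/d) *\<^sub>R P x" for x
    have bZ0: "bounded_clinear Z0"
      unfolding Z0_def[abs_def] by (rule bcl_minus_fun[OF bcl_ident bcl_scaleR_fun[OF bP]])
    have saP: "cinner (P x) z = cinner x (P z)" for x z
    proof -
      have "cinner (P x) z = cnj (cinner z (P x))" by (rule cinner_commute)
      also have "\<dots> = cnj (cinner (N z) (N x))" by (simp add: f1')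
      also have "\<dots> = cinner (N x) (N z)" by (rule cinner_commute[symmetric])
      finally show ?thesis by (simp add: f1')
    qed
    have saZ0: "is_adjoint Z0 Z0"
      unfolding is_adjoint_def Z0_def
      by (simp add: cinner_diff_left cinner_diff_right cinner_scaleR_left cinner_scaleR_right saP)
    have cZ0: "norm (Z0 x) \<le> norm x" for x
    proof -
      have "(norm (Z0 x))\<^sup>2 = (norm (x - complex_of_real (1/d) *\<^sub>C P x))\<^sup>2"
        by (simp add: Z0_def scaleR_scaleC)
      also have "\<dots> = (norm x)\<^sup>2 - 2 * Re (cnj (complex_of_real (1/d)) * cinner (P x) x)
          + (cmod (complex_of_real (1/d)))\<^sup>2 * (norm (P x))\<^sup>2"
        by (rule norm_sq_diff_scaleC)
      also have "Re (cnj (complex_of_real (1/d)) * cinner (P x) x) = (1/d) * (norm (N x))\<^sup>2"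
        by (simp add: Re_f1)
      also have "(cmod (complex_of_real (1/d)))\<^sup>2 = (1/d)\<^sup>2" by (simp only: norm_of_real power2_abs)
      finally have e: "(norm (Z0 x))\<^sup>2 = (norm x)\<^sup>2 - 2 * ((1/d) * (norm (N x))\<^sup>2) + (1/d)\<^sup>2 * (norm (P x))\<^sup>2" .
      have "(1/d)\<^sup>2 * (norm (P x))\<^sup>2 \<le> (1/d)\<^sup>2 * (S * (norm (N x))\<^sup>2)"
        by (rule mult_left_mono[OF f5]) simp
      also have "\<dots> \<le> 2 * ((1/d) * (norm (N x))\<^sup>2)"
      proof -
        have "(1/d)\<^sup>2 * S \<le> 2 * (1/d)" using dS2 d0 by (simp add: power2_eq_square field_simps)
        then have "((1/d)\<^sup>2 * S) * (norm (N x))\<^sup>2 \<le> (2 * (1/d)) * (norm (N x))\<^sup>2"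
          by (rule mult_right_mono) simp
        then show ?thesis by (simp only: mult.assoc)
      qed
      finally have "(norm (Z0 x))\<^sup>2 \<le> (norm x)\<^sup>2" using e by linarith
      then show ?thesis by (rule power2_le_imp_le) simp
    qed
    interpret Zc: sa_contr Z0 using bZ0 saZ0 cZ0 by unfold_locales auto
    define Zp where "Zp v = Zc.W v + Z0 v" for v
    have NZ0: "N (Z0 x) = Z0 (N x)" for x
      by (simp add: Z0_def P_def bcl_diff[OF bN] bcl_scaleR[OF bN] comm)
    have NW: "N (Zc.W x) = Zc.W (N x)" for x by (rule Zc.W_commute[OF bN NZ0])
    have NZp: "N (Zp x) = Zp (N x)" for x by (simp add: Zp_def bcl_add[OF bN] NW NZ0)
    have onR: "Z0 (Zp w) = Zc.W (Zp w)" for w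
    proof -
      have "Zc.W (Zp w) = Zc.W (Zc.W w) + Zc.W (Z0 w)" by (simp add: Zp_def bcl_add[OF Zc.bW])
      also have "\<dots> = Z0 (Z0 w) + Z0 (Zc.W w)" by (simp add: Zc.W_sq Zc.WZ)
      also have "\<dots> = Z0 (Zp w)" by (simp add: Zp_def bcl_add[OF bZ0] add.commute)
      finally show ?thesis by simp
    qed
    have Pbound: "norm (P (Zp w)) \<le> d * norm (Zp w)" for w
    proof -
      let ?v = "Zp w"
      have dv: "d *\<^sub>R ?v - P ?v = d *\<^sub>R Z0 ?v" using d0 by (simp add: Z0_def scaleR_diff_right)
      have "Re (cinner (P ?v) (Zc.W ?v)) \<ge> 0"
      proof -
        have "cinner (P ?v) (Zc.W ?v) = cinner (N ?v) (N (Zc.W ?v))"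
          unfolding P_def using is_adjointD[OF adj'] by simp
        also have "\<dots> = cinner (N ?v) (Zc.W (N ?v))" by (simp add: NW)
        also have "\<dots> = cnj (cinner (Zc.W (N ?v)) (N ?v))" by (rule cinner_commute)
        finally show ?thesis using Zc.W_pos[of "N ?v"] by simp
      qed
      then have "Re (cinner (P ?v) (d *\<^sub>R Z0 ?v)) \<ge> 0"
        using d0 by (simp add: cinner_scaleR_right onR)
      then have "Re (cinner (P ?v) (d *\<^sub>R ?v - P ?v)) \<ge> 0" by (simp add: dv)
      then have "(norm (P ?v))\<^sup>2 \<le> d * Re (cinner (P ?v) ?v)"
        by (simp add: cinner_diff_right cinner_scaleR_right Re_cinner_self)
      also have "Re (cinner (P ?v) ?v) \<le> norm (P ?v) * norm ?v"
        using complex_Re_le_cmod[of "cinner (P ?v) ?v"] Cauchy_Schwarz[of "P ?v" ?v] by linarith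
      then have "d * Re (cinner (P ?v) ?v) \<le> d * (norm (P ?v) * norm ?v)"
        using d0 by (simp add: mult_left_mono)
      finally have "norm (P ?v) * norm (P ?v) \<le> norm (P ?v) * (d * norm ?v)"
        by (simp add: power2_eq_square mult_ac)
      then show ?thesis
        by (cases "norm (P ?v) = 0") (use d0 in \<open>auto simp: mult_le_cancel_left\<close>)
    qed
    have Nbound: "norm (N (Zp w)) \<le> sqrt d * norm (Zp w)" for w
    proof -
      let ?v = "Zp w"
      have "(norm (N ?v))\<^sup>2 = Re (cinner (P ?v) ?v)" by (simp add: Re_f1)
      also have "\<dots> \<le> norm (P ?v) * norm ?v"
        using complex_Re_le_cmod[of "cinner (P ?v) ?v"] Cauchy_Schwarz[of "P ?v" ?v] by linarith
      also have "\<dots> \<le> d * norm ?v * norm ?v" by (rule mult_right_mono[OF Pbound]) simp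
      also have "\<dots> = (sqrt d * norm ?v)\<^sup>2" using d0 by (simp add: power2_eq_square power_mult_distrib)
      finally show ?thesis by (rule power2_le_imp_le) (use d0 in simp)
    qed
    have "\<exists>y0. Zp y0 \<noteq> 0"
    proof (rule ccontr)
      assume "\<not> (\<exists>y0. Zp y0 \<noteq> 0)"
      then have "Zc.W y + Z0 y = 0" by (simp add: Zp_def)
      then have "Zc.W y = - Z0 y" by (simp only: eq_neg_iff_add_eq_0)
      then have "Re (cinner (Z0 y) y) \<le> 0" using Zc.W_pos[of y] by (simp add: cinner_minus_left)
      moreover have "Re (cinner (Z0 y) y) = (norm y)\<^sup>2 - (1/d) * Re (cinner (P y) y)"
        by (simp add: Z0_def cinner_diff_left cinner_scaleR_left Re_cinner_self)
      moreover have "(1/d) * Re (cinner (P y) y) < (norm y)\<^sup>2"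
      proof -
        have "Re (cinner (P y) y) = q * (norm y)\<^sup>2" using ny by (simp add: q_def)
        also have "\<dots> < d * (norm y)\<^sup>2" using dq ny by simp
        finally show ?thesis using d0 by (simp add: field_simps)
      qed
      ultimately show False by linarith
    qed
    then obtain y0 where u0: "Zp y0 \<noteq> 0" by blast
    define u where "u = Zp y0"
    have pow: "(N ^^ n) u = Zp ((N ^^ n) y0)" for n
      unfolding u_def by (rule funpow_commute[symmetric]) (rule NZp[symmetric])
    have "norm ((N ^^ n) u) \<le> sqrt d ^ n * norm u" for n
    proof (induction n)
      case (Suc n)
      have "norm ((N ^^ Suc n) u) = norm (N (Zp ((N ^^ n) y0)))" by (simp add: pow[symmetric])
      also have "\<dots> \<le> sqrt d * norm (Zp ((N ^^ n) y0))" by (rule Nbound)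
      also have "\<dots> = sqrt d * norm ((N ^^ n) u)" by (simp add: pow)
      also have "\<dots> \<le> sqrt d * (sqrt d ^ n * norm u)" using Suc d0 by (simp add: mult_left_mono)
      finally show ?case by (simp add: mult.assoc)
    qed simp
    then have "u \<in> disc_space N (sqrt d)" by (simp add: disc_space_def)
    moreover have "u \<noteq> 0" using u0 by (simp add: u_def)
    ultimately have "disc_space N (sqrt d) = UNIV" using triv[of "sqrt d"] d0 by auto
    then have "norm (N x) \<le> sqrt d * norm x" for x
    proof -
      assume "disc_space N (sqrt d) = UNIV"
      then have "x \<in> disc_space N (sqrt d)" by simp
      then have "norm ((N ^^ 1) x) \<le> sqrt d ^ 1 * norm x" unfolding disc_space_def by blast
      then show ?thesis by simp
    qed
    then have "onorm N \<le> sqrt d" by (intro onorm_bound) (use d0 in auto)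
    then have "S \<le> (sqrt d)\<^sup>2" unfolding S_def by (rule power_mono) (rule onN)
    then show False using d0 dS by simp
  qed
  define Q where "Q y = S *\<^sub>R y - P y" for y
  have "Q y = 0" for y
  proof (rule polarization_zero[of Q])
    show "Q (a + b) = Q a + Q b" for a b by (simp add: Q_def bcl_add[OF bP] scaleR_add_right)
    show "Q (c *\<^sub>C a) = c *\<^sub>C Q a" for c a
      by (simp add: Q_def bcl_scaleC[OF bP] scaleR_scaleC_commute scaleC_diff_right)
    show "cinner z (Q z) = 0" for z
    proof -
      have "(norm (N z))\<^sup>2 = S * (norm z)\<^sup>2" using main[of z] f3[of z] Re_f1[of z] by linarith
      then show ?thesis
        by (simp add: Q_def cinner_diff_right cinner_scaleR_right f1' cinner_self)
    qed
  qed
  then have "N' (N x) = S *\<^sub>R x" for x by (simp add: Q_def P_def)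
  then show ?thesis by blast
qed

end

lemma N_expand:
  fixes M M' :: "'a::chilbert_space \<Rightarrow> 'a"
  assumes bM: "bounded_clinear M" and bM': "bounded_clinear M'"
  shows "M' (M x - \<mu> *\<^sub>C x) - cnj \<mu> *\<^sub>C (M x - \<mu> *\<^sub>C x)
       = M' (M x) - \<mu> *\<^sub>C M' x - cnj \<mu> *\<^sub>C M x + (cnj \<mu> * \<mu>) *\<^sub>C x"
  by (simp add: bcl_diff[OF bM'] bcl_scaleC[OF bM'] scaleC_diff_right scaleC_scaleC algebra_simps)

lemma normal_scalar:
  fixes A M :: "'a::chilbert_space \<Rightarrow> 'a"
  assumes bA: "bounded_clinear A" and irr: "irreducible_op A" and MN: "M \<in> commuting_normals A"
  shows "\<exists>c. \<forall>x. M x = c *\<^sub>C x"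
proof -
  have bM: "bounded_clinear M" and MM: "M \<circ> adjoint M = adjoint M \<circ> M" and AM: "A \<circ> M = M \<circ> A"
    using MN by (auto simp: commuting_normals_def normal_op_def)
  define M' where "M' = adjoint M"
  define A' where "A' = adjoint A"
  have adjM: "is_adjoint M M'" unfolding M'_def by (rule adjoint_exists[OF bM])
  have adjA: "is_adjoint A A'" unfolding A'_def by (rule adjoint_exists[OF bA])
  have bM': "bounded_clinear M'" by (rule is_adjoint_bounded[OF bM adjM])
  have bA': "bounded_clinear A'" by (rule is_adjoint_bounded[OF bA adjA])
  have commM: "M (M' x) = M' (M x)" for x using MM unfolding M'_def by (metis comp_apply)
  have AMx: "A (M x) = M (A x)" for x using AM by (metis comp_apply)
  have A'M': "A' (M' x) = M' (A' x)" for x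
  proof -
    have "cinner z (A' (M' x)) = cinner z (M' (A' x))" for z
    proof -
      have "cinner z (A' (M' x)) = cinner (A z) (M' x)" using is_adjointD[OF adjA] by simp
      also have "\<dots> = cinner (M (A z)) x" using is_adjointD[OF adjM] by simp
      also have "\<dots> = cinner (A (M z)) x" by (simp add: AMx)
      also have "\<dots> = cinner (M z) (A' x)" using is_adjointD[OF adjA] by simp
      also have "\<dots> = cinner z (M' (A' x))" using is_adjointD[OF adjM] by simp
      finally show ?thesis .
    qed
    then have "\<And>z. cinner z (A' (M' x) - M' (A' x)) = 0" by (simp add: cinner_diff_right)
    from cinner_eq_zero_all[OF this] show ?thesis by simp
  qed
  have scal: "\<exists>s. \<forall>x. M' (M x - \<mu> *\<^sub>C x) - cnj \<mu> *\<^sub>C (M x - \<mu> *\<^sub>C x) = s *\<^sub>R x" for \<mu>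
  proof -
    define N where "N x = M x - \<mu> *\<^sub>C x" for x
    define N' where "N' x = M' x - cnj \<mu> *\<^sub>C x" for x
    have bN: "bounded_clinear N" unfolding N_def[abs_def] by (rule bcl_minus_fun[OF bM bcl_smult])
    have adjN: "is_adjoint N N'"
      unfolding is_adjoint_def N_def N'_def
      using is_adjointD[OF adjM] by (simp add: cinner_diff_left cinner_diff_right cinner_scaleC_left cinner_scaleC_right)
    have commN: "N (N' x) = N' (N x)" for x
      unfolding N_def N'_def
      by (simp add: bcl_diff[OF bM] bcl_diff[OF bM'] bcl_scaleC[OF bM] bcl_scaleC[OF bM'] commM
          scaleC_diff_right scaleC_scaleC algebra_simps mult.commute)
    interpret np: normal_pair N N' using bN adjN commN by unfold_locales auto
    have np': "normal_pair N' N"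
      using np.bN' is_adjoint_sym[OF adjN] commN by unfold_locales auto
    have triv: "disc_space N c = {0} \<or> disc_space N c = UNIV" if c0: "c \<ge> 0" for c
    proof (rule reducing_trivial[OF irr bA adjA np.disc_closed np.disc_csub[OF c0]])
      fix x assume x: "x \<in> disc_space N c"
      show "A x \<in> disc_space N c"
      proof (rule np.disc_invariant[OF c0 bA _ x])
        show "A (N y) = N (A y)" for y by (simp add: N_def bcl_diff[OF bA] bcl_scaleC[OF bA] AMx)
      qed
      have "x \<in> disc_space N' c" using x np.disc_space_adj by simp
      moreover have BN': "A' (N' y) = N' (A' y)" for y
        by (simp add: N'_def bcl_diff[OF bA'] bcl_scaleC[OF bA'] A'M')
      ultimately have "A' x \<in> disc_space N' c"
        using normal_pair.disc_invariant[OF np' c0 bA'] by blast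
      then show "A' x \<in> disc_space N c" using np.disc_space_adj by simp
    qed
    obtain s where "\<forall>x. N' (N x) = s *\<^sub>R x" using np.scalar_NN[OF triv] by blast
    then show ?thesis unfolding N_def N'_def by blast
  qed
  obtain s0 where s0: "\<And>x. M' (M x - 0 *\<^sub>C x) - cnj 0 *\<^sub>C (M x - 0 *\<^sub>C x) = s0 *\<^sub>R x"
    using scal[where \<mu>=0] by blast
  obtain s1 where s1: "\<And>x. M' (M x - 1 *\<^sub>C x) - cnj 1 *\<^sub>C (M x - 1 *\<^sub>C x) = s1 *\<^sub>R x"
    using scal[where \<mu>=1] by blast
  obtain s2 where s2: "\<And>x. M' (M x - \<i> *\<^sub>C x) - cnj \<i> *\<^sub>C (M x - \<i> *\<^sub>C x) = s2 *\<^sub>R x"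
    using scal[where \<mu>=\<i>] by blast
  define \<alpha> where "\<alpha> = complex_of_real (s0 + 1 - s1)"
  define \<beta> where "\<beta> = - \<i> * complex_of_real (s2 - s0 - 1)"
  have "M x = ((\<alpha> + \<beta>) / 2) *\<^sub>C x" for x
  proof -
    let ?a = "M x" and ?b = "M' x" and ?e = "M' (M x)"
    have e0: "?e = s0 *\<^sub>R x" using s0[of x] by simp
    have e1: "?e - ?b - ?a + x = s1 *\<^sub>R x"
      using s1[of x] N_expand[OF bM bM', where \<mu>=1 and x=x] by (simp add: scaleC_one)
    have e2: "?e - \<i> *\<^sub>C ?b + \<i> *\<^sub>C ?a + x = s2 *\<^sub>R x"
    proof -
      have "cnj \<i> * \<i> = 1" by simp
      then show ?thesis using s2[of x] N_expand[OF bM bM', where \<mu>=\<i> and x=x]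
        by (simp add: scaleC_one scaleC_minus_left)
    qed
    have E1: "?a + ?b = \<alpha> *\<^sub>C x"
    proof -
      have "?a + ?b = ?e + x - s1 *\<^sub>R x" using e1 by (simp add: algebra_simps)
      also have "\<dots> = (s0 + 1 - s1) *\<^sub>R x" by (simp add: e0 algebra_simps)
      finally show ?thesis by (simp add: \<alpha>_def scaleR_scaleC)
    qed
    have E2: "\<i> *\<^sub>C (?a - ?b) = (s2 - s0 - 1) *\<^sub>R x"
    proof -
      have "\<i> *\<^sub>C (?a - ?b) = \<i> *\<^sub>C ?a - \<i> *\<^sub>C ?b" by (rule scaleC_diff_right)
      also have "\<dots> = s2 *\<^sub>R x - ?e - x" using e2 by (simp add: algebra_simps)
      also have "\<dots> = (s2 - s0 - 1) *\<^sub>R x" by (simp add: e0 algebra_simps)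
      finally show ?thesis .
    qed
    have E2': "?a - ?b = \<beta> *\<^sub>C x"
    proof -
      have "?a - ?b = (- \<i>) *\<^sub>C (\<i> *\<^sub>C (?a - ?b))" by (simp add: scaleC_scaleC scaleC_one)
      also have "\<dots> = (- \<i>) *\<^sub>C ((s2 - s0 - 1) *\<^sub>R x)" by (simp only: E2)
      finally show ?thesis by (simp add: \<beta>_def scaleR_scaleC scaleC_scaleC)
    qed
    have "?a + ?a = (\<alpha> + \<beta>) *\<^sub>C x"
    proof -
      have "?a + ?a = (?a + ?b) + (?a - ?b)" by simp
      also have "\<dots> = \<alpha> *\<^sub>C x + \<beta> *\<^sub>C x" by (simp only: E1 E2')
      finally show ?thesis by (simp add: scaleC_add_left)
    qed
    moreover have "(2::complex) *\<^sub>C ?a = ?a + ?a"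
    proof -
      have two: "(2::complex) = 1 + 1" by simp
      have "(2::complex) *\<^sub>C ?a = (1 + 1) *\<^sub>C ?a" by (simp only: two)
      also have "\<dots> = ?a + ?a" by (simp only: scaleC_add_left scaleC_one)
      finally show ?thesis .
    qed
    ultimately have "(2::complex) *\<^sub>C ?a = (\<alpha> + \<beta>) *\<^sub>C x" by simp
    then have "(1/2::complex) *\<^sub>C ((2::complex) *\<^sub>C ?a) = (1/2::complex) *\<^sub>C ((\<alpha> + \<beta>) *\<^sub>C x)" by simp
    then show ?thesis by (simp add: scaleC_scaleC scaleC_one)
  qed
  then show ?thesis by blast
qed

lemma smult_in_commuting_normals:
  fixes A :: "'a::chilbert_space \<Rightarrow> 'a"
  assumes bA: "bounded_clinear A"
  shows "(\<lambda>x. c *\<^sub>C x) \<in> commuting_normals A"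
proof -
  have adj: "is_adjoint (\<lambda>x::'a. c *\<^sub>C x) (\<lambda>x. cnj c *\<^sub>C x)"
    unfolding is_adjoint_def by (simp add: cinner_scaleC_left cinner_scaleC_right)
  have ad: "adjoint (\<lambda>x::'a. c *\<^sub>C x) = (\<lambda>x. cnj c *\<^sub>C x)" by (rule adjoint_eqI[OF adj])
  have "(\<lambda>x::'a. c *\<^sub>C x) \<circ> (\<lambda>x. cnj c *\<^sub>C x) = (\<lambda>x. cnj c *\<^sub>C x) \<circ> (\<lambda>x. c *\<^sub>C x)"
    by (simp add: fun_eq_iff scaleC_scaleC mult.commute)
  moreover have "A \<circ> (\<lambda>x. c *\<^sub>C x) = (\<lambda>x. c *\<^sub>C x) \<circ> A"
    by (simp add: fun_eq_iff bcl_scaleC[OF bA])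
  ultimately show ?thesis
    unfolding commuting_normals_def normal_op_def using bcl_smult[of c] ad by simp
qed

theorem proposition2:
  fixes A :: "'a::chilbert_space \<Rightarrow> 'a"
  assumes "bounded_clinear A"
    and "irreducible_op A"
  shows "(INF M\<in>commuting_normals A. onorm (\<lambda>x. A x + M x))
       = (INF c::complex. onorm (\<lambda>x. A x - c *\<^sub>C x))"
proof -
  note bA = assms(1) and irr = assms(2)
  have bG: "bounded_linear (\<lambda>x. A x - c *\<^sub>C x)" for c
    by (rule bounded_clinear_bounded_linear[OF bcl_minus_fun[OF bA bcl_smult]])
  have bddG: "bdd_below (range (\<lambda>c::complex. onorm (\<lambda>x. A x - c *\<^sub>C x)))"
    by (rule bdd_belowI[of _ 0]) (auto intro: onorm_pos_le[OF bG])
  have bF: "bounded_linear (\<lambda>x. A x + M x)" if "M \<in> commuting_normals A" for M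
  proof -
    have "bounded_clinear M" using that by (simp add: commuting_normals_def normal_op_def)
    then show ?thesis by (rule bounded_clinear_bounded_linear[OF bcl_plus[OF bA]])
  qed
  have bddF: "bdd_below ((\<lambda>M. onorm (\<lambda>x. A x + M x)) ` commuting_normals A)"
    by (rule bdd_belowI[of _ 0]) (auto intro: onorm_pos_le[OF bF])
  have ne: "commuting_normals A \<noteq> {}" using smult_in_commuting_normals[OF bA, of 0] by blast
  have le1: "(INF M\<in>commuting_normals A. onorm (\<lambda>x. A x + M x))
       \<le> (INF c::complex. onorm (\<lambda>x. A x - c *\<^sub>C x))"
  proof (rule cINF_greatest)
    fix c :: complex
    have "(INF M\<in>commuting_normals A. onorm (\<lambda>x. A x + M x)) \<le> onorm (\<lambda>x. A x + (- c) *\<^sub>C x)"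
      by (rule cINF_lower[OF bddF smult_in_commuting_normals[OF bA]])
    also have "(\<lambda>x. A x + (- c) *\<^sub>C x) = (\<lambda>x. A x - c *\<^sub>C x)"
      by (simp add: scaleC_minus_left)
    finally show "(INF M\<in>commuting_normals A. onorm (\<lambda>x. A x + M x)) \<le> onorm (\<lambda>x. A x - c *\<^sub>C x)" .
  qed simp
  have le2: "(INF c::complex. onorm (\<lambda>x. A x - c *\<^sub>C x))
       \<le> (INF M\<in>commuting_normals A. onorm (\<lambda>x. A x + M x))"
  proof (rule cINF_greatest[OF ne])
    fix M assume MN: "M \<in> commuting_normals A"
    obtain c where c: "\<And>x. M x = c *\<^sub>C x" using normal_scalar[OF bA irr MN] by blast
    have "(INF c::complex. onorm (\<lambda>x. A x - c *\<^sub>C x)) \<le> onorm (\<lambda>x. A x - (- c) *\<^sub>C x)"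
      by (rule cINF_lower[OF bddG]) simp
    also have "(\<lambda>x. A x - (- c) *\<^sub>C x) = (\<lambda>x. A x + M x)"
      by (simp add: scaleC_minus_left c)
    finally show "(INF c::complex. onorm (\<lambda>x. A x - c *\<^sub>C x)) \<le> onorm (\<lambda>x. A x + M x)" .
  qed
  from le1 le2 show ?thesis by (rule antisym)
qed

end
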